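(* Define $$\widetilde{\mathcal I}_q^N=\frac1{N^2}\log_2\frac{P_{Y^{N\times N}|X^{N\times N},\Phi}(Y^{N\times N}|X^{N\times N},\Phi)}{P_{Y^{N\times N}|X_{sf},\Phi}(Y^{N\times N}|X_{sf},\Phi)}.$$ Then for every $\epsilon>0$, $$\lim_{N\to\infty}\Pr\bigl(|\mathcal I_q^N-\widetilde{\mathcal I}_q^N|<\epsilon\bigr)=1.$$
   Context: ReRAM channel model. Fix resistances $0<R_1<R_0$ and $R_s>0$, and for $x,v\in\{0,1\}$ define $R_x(v)=\bigl(1/R_x+(1-x)v/R_s\bigr)^{-1}$. Fix $\sigma>0$, an integer $K\ge0$, $0<q<1$, and a probability vector $(p_0,\dots,p_K)$. For each $N$, the input $X^{N\times N}$ has i.i.d. Bernoulli$(q)$ entries. The SF pattern $\Phi\subseteq\{1,\dots,N\}^2$ is random with $\Pr(\Phi=\varphi)=p_k/\binom{N^2}{k}$ when $|\varphi|=k\le K$. The noise $Z_{m,n}\sim\mathcal N(0,\sigma^2)$ is i.i.d. The three objects $X$, $\Phi$ and $Z$ are mutually independent. The output is $$Y_{m,n}=R_{X_{m,n}}\Bigl(\bigvee_{(i,j)\in\Phi}X_{m,j}X_{i,j}X_{i,n}\Bigr)+Z_{m,n}.$$ $X_{sf}$ denotes the entries of $X^{N\times N}$ in rows $i$ or columns $j$ for which some $(i,j)\in\Phi$. $W^\Phi_N(y|x)=P_{Y^{N\times N}|X^{N\times N}}(y|x)$ is the conditional density averaged over $\Phi$. The mutual information density rate is $$\mathcal I_q^N=\frac1{N^2}\log_2\frac{W^\Phi_N(Y^{N\times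 N}|X^{N\times N})}{P_{Y^{N\times N}}(Y^{N\times N})}.$$ *)

theory Defs
  imports "HOL-Probability.Probability"
begin

type_synonym bmat = "nat \<times> nat \<Rightarrow> bool"
type_synonym rmat = "nat \<times> nat \<Rightarrow> real"
type_synonym pattern = "(nat \<times> nat) set"

definition grid :: "nat \<Rightarrow> (nat \<times> nat) set" where
  "grid N = {1..N} \<times> {1..N}"

text \<open>Binary N x N input matrices (entries outside the grid are fixed to False).\<close>
definition Xset :: "nat \<Rightarrow> bmat set" where
  "Xset N = {x. \<forall>ij. x ij \<longrightarrow> ij \<in> grid N}"

definition PX :: "real \<Rightarrow> nat \<Rightarrow> bmat \<Rightarrow> real" where
  "PX q N x = (\<Prod>ij\<in>grid N. if x ij then q else 1 - q)"

definition Phiset :: "nat \<Rightarrow> nat \<Rightarrow> pattern set" where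
  "Phiset K N = {\<phi>. \<phi> \<subseteq> grid N \<and> card \<phi> \<le> K}"

definition PPhi :: "(nat \<Rightarrow> real) \<Rightarrow> nat \<Rightarrow> pattern \<Rightarrow> real" where
  "PPhi p N \<phi> = p (card \<phi>) / real ((N\<^sup>2) choose (card \<phi>))"

definition Rcell :: "real \<Rightarrow> real \<Rightarrow> real \<Rightarrow> bool \<Rightarrow> bool \<Rightarrow> real" where
  "Rcell R0 R1 Rs x v =
     1 / (1 / (if x then R1 else R0) + (1 - of_bool x) * of_bool v / Rs)"

definition sneak :: "bmat \<Rightarrow> pattern \<Rightarrow> nat \<times> nat \<Rightarrow> bool" where
  "sneak x \<phi> mn = (\<exists>(i,j)\<in>\<phi>. x (fst mn, j) \<and> x (i, j) \<and> x (i, snd mn))"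

definition meanY :: "real \<Rightarrow> real \<Rightarrow> real \<Rightarrow> bmat \<Rightarrow> pattern \<Rightarrow> nat \<times> nat \<Rightarrow> real" where
  "meanY R0 R1 Rs x \<phi> mn = Rcell R0 R1 Rs (x mn) (sneak x \<phi> mn)"

definition Yout :: "real \<Rightarrow> real \<Rightarrow> real \<Rightarrow> bmat \<Rightarrow> pattern \<Rightarrow> rmat \<Rightarrow> rmat" where
  "Yout R0 R1 Rs x \<phi> z = (\<lambda>mn. meanY R0 R1 Rs x \<phi> mn + z mn)"

definition PYgXPhi :: "real \<Rightarrow> real \<Rightarrow> real \<Rightarrow> real \<Rightarrow> nat \<Rightarrow> rmat \<Rightarrow> bmat \<Rightarrow> pattern \<Rightarrow> real" where
  "PYgXPhi R0 R1 Rs \<sigma> N y x \<phi> =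
     (\<Prod>mn\<in>grid N. normal_density (meanY R0 R1 Rs x \<phi> mn) \<sigma> (y mn))"

definition WPhi :: "real \<Rightarrow> real \<Rightarrow> real \<Rightarrow> real \<Rightarrow> (nat \<Rightarrow> real) \<Rightarrow> nat \<Rightarrow> nat
     \<Rightarrow> rmat \<Rightarrow> bmat \<Rightarrow> real" where
  "WPhi R0 R1 Rs \<sigma> p K N y x =
     (\<Sum>\<phi>\<in>Phiset K N. PPhi p N \<phi> * PYgXPhi R0 R1 Rs \<sigma> N y x \<phi>)"

definition PY :: "real \<Rightarrow> real \<Rightarrow> real \<Rightarrow> real \<Rightarrow> real \<Rightarrow> (nat \<Rightarrow> real) \<Rightarrow> nat \<Rightarrow> nat
     \<Rightarrow> rmat \<Rightarrow> real" where
  "PY R0 R1 Rs \<sigma> q p K N y =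
     (\<Sum>x\<in>Xset N. PX q N x * WPhi R0 R1 Rs \<sigma> p K N y x)"

definition sfset :: "nat \<Rightarrow> pattern \<Rightarrow> (nat \<times> nat) set" where
  "sfset N \<phi> = {mn \<in> grid N. \<exists>(i,j)\<in>\<phi>. fst mn = i \<or> snd mn = j}"

text \<open>P_{Y|X_sf,Phi}(y|x_sf,phi): the entries of X outside X_sf are, given (X_sf,Phi),
  still i.i.d. Bernoulli(q) (independence of X and Phi), so they are averaged out.\<close>
definition PYgXsfPhi :: "real \<Rightarrow> real \<Rightarrow> real \<Rightarrow> real \<Rightarrow> real \<Rightarrow> nat
     \<Rightarrow> rmat \<Rightarrow> bmat \<Rightarrow> pattern \<Rightarrow> real" where
  "PYgXsfPhi R0 R1 Rs \<sigma> q N y x \<phi> =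
     (\<Sum>x'\<in>{x' \<in> Xset N. \<forall>mn\<in>sfset N \<phi>. x' mn = x mn}.
        (\<Prod>mn\<in>grid N - sfset N \<phi>. if x' mn then q else 1 - q)
        * PYgXPhi R0 R1 Rs \<sigma> N y x' \<phi>)"

definition XPhi_law :: "real \<Rightarrow> (nat \<Rightarrow> real) \<Rightarrow> nat \<Rightarrow> nat \<Rightarrow> (bmat \<times> pattern) measure" where
  "XPhi_law q p K N =
     density (count_space (Xset N \<times> Phiset K N))
       (\<lambda>(x,\<phi>). ennreal (PX q N x * PPhi p N \<phi>))"

definition Noise_law :: "real \<Rightarrow> nat \<Rightarrow> rmat measure" where
  "Noise_law \<sigma> N = PiM (grid N) (\<lambda>_. density lborel (normal_density 0 \<sigma>))"

definition Omega :: "real \<Rightarrow> real \<Rightarrow> (nat \<Rightarrow> real) \<Rightarrow> nat \<Rightarrow> nat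
     \<Rightarrow> ((bmat \<times> pattern) \<times> rmat) measure" where
  "Omega \<sigma> q p K N = XPhi_law q p K N \<Otimes>\<^sub>M Noise_law \<sigma> N"

definition Iq :: "real \<Rightarrow> real \<Rightarrow> real \<Rightarrow> real \<Rightarrow> real \<Rightarrow> (nat \<Rightarrow> real) \<Rightarrow> nat \<Rightarrow> nat
     \<Rightarrow> (bmat \<times> pattern) \<times> rmat \<Rightarrow> real" where
  "Iq R0 R1 Rs \<sigma> q p K N \<omega> =
     (let x = fst (fst \<omega>); \<phi> = snd (fst \<omega>); y = Yout R0 R1 Rs x \<phi> (snd \<omega>) in
      1 / real (N\<^sup>2) * log 2 (WPhi R0 R1 Rs \<sigma> p K N y x / PY R0 R1 Rs \<sigma> q p K N y))"

definition Iq_tilde :: "real \<Rightarrow> real \<Rightarrow> real \<Rightarrow> real \<Rightarrow> real \<Rightarrow> nat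
     \<Rightarrow> (bmat \<times> pattern) \<times> rmat \<Rightarrow> real" where
  "Iq_tilde R0 R1 Rs \<sigma> q N \<omega> =
     (let x = fst (fst \<omega>); \<phi> = snd (fst \<omega>); y = Yout R0 R1 Rs x \<phi> (snd \<omega>) in
      1 / real (N\<^sup>2) * log 2 (PYgXPhi R0 R1 Rs \<sigma> N y x \<phi> / PYgXsfPhi R0 R1 Rs \<sigma> q N y x \<phi>))"

end

theory Submission
  imports Defs
begin


lemma normal_density_shift: "normal_density c s (c + t) = normal_density 0 s t"
  by (simp add: normal_density_def)

lemma emeasure_shift_normal:
  assumes [measurable]: "A \<in> sets borel"
  shows "emeasure (density lborel (normal_density 0 s)) {t. t + c \<in> A}
       = emeasure (density lborel (normal_density c s)) A"
proof -
  have "emeasure (density lborel (normal_density c s)) A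
      = (\<integral>\<^sup>+x. ennreal (normal_density c s x) * indicator A x \<partial>lborel)"
    by (subst emeasure_density) auto
  also have "\<dots> = (\<integral>\<^sup>+x. ennreal (normal_density c s x) * indicator A x \<partial>distr lborel borel ((+) c))"
    by (simp add: lborel_distr_plus)
  also have "\<dots> = (\<integral>\<^sup>+t. ennreal (normal_density c s (c + t)) * indicator A (c + t) \<partial>lborel)"
    by (subst nn_integral_distr) auto
  also have "\<dots> = (\<integral>\<^sup>+t. ennreal (normal_density 0 s t) * indicator {t. t + c \<in> A} t \<partial>lborel)"
    by (intro nn_integral_cong) (auto simp: normal_density_def indicator_def add.commute)
  also have "\<dots> = emeasure (density lborel (normal_density 0 s)) {t. t + c \<in> A}"
    by (subst emeasure_density) auto
  finally show ?thesis ..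
qed


lemma ps_normal: "0 < s \<Longrightarrow> prob_space (density lborel (normal_density m s))"
  by (rule prob_space_normal_density)

lemma psf_lborel: "product_sigma_finite (\<lambda>_::'i. lborel)"
  by (simp add: product_sigma_finite_def lborel.sigma_finite_measure_axioms)

lemma psf_normal: "0 < s \<Longrightarrow> product_sigma_finite (\<lambda>i. density lborel (normal_density (\<mu> i) s))"
  unfolding product_sigma_finite_def
  using ps_normal prob_space_imp_sigma_finite by blast

lemma PiM_normal_density:
  assumes I: "finite I" and s: "0 < s"
  shows "PiM I (\<lambda>i. density lborel (normal_density (\<mu> i) s))
       = density (PiM I (\<lambda>_. lborel)) (\<lambda>y. \<Prod>i\<in>I. ennreal (normal_density (\<mu> i) s (y i)))"
proof -
  interpret P: product_sigma_finite "\<lambda>i. density lborel (normal_density (\<mu> i) s)"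
    using psf_normal[OF s] .
  interpret L: product_sigma_finite "\<lambda>_::'a. lborel" by (rule psf_lborel)
  show ?thesis
  proof (rule P.PiM_eqI[symmetric, OF I])
    show "sets (density (PiM I (\<lambda>_. lborel)) (\<lambda>y. \<Prod>i\<in>I. ennreal (normal_density (\<mu> i) s (y i))))
        = sets (PiM I (\<lambda>i. density lborel (normal_density (\<mu> i) s)))"
      by (auto intro!: sets_PiM_cong)
  next
    fix A assume A: "\<And>i. i \<in> I \<Longrightarrow> A i \<in> sets (density lborel (normal_density (\<mu> i) s))"
    then have A': "\<And>i. i \<in> I \<Longrightarrow> A i \<in> sets borel" by auto
    have "PiE I A \<in> sets (PiM I (\<lambda>_. lborel))"
      using A' by (intro sets_PiM_I_finite I) auto
    then have "emeasure (density (PiM I (\<lambda>_. lborel)) (\<lambda>y. \<Prod>i\<in>I. ennreal (normal_density (\<mu> i) s (y i)))) (PiE I A)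
       = (\<integral>\<^sup>+y. (\<Prod>i\<in>I. ennreal (normal_density (\<mu> i) s (y i))) * indicator (PiE I A) y \<partial>PiM I (\<lambda>_. lborel))"
      by (subst emeasure_density) auto
    also have "\<dots> = (\<integral>\<^sup>+y. (\<Prod>i\<in>I. ennreal (normal_density (\<mu> i) s (y i)) * indicator (A i) (y i)) \<partial>PiM I (\<lambda>_. lborel))"
    proof (intro nn_integral_cong)
      fix y :: "'a \<Rightarrow> real" assume "y \<in> space (PiM I (\<lambda>_::'a. lborel))"
      then have ext: "y \<in> extensional I" by (auto simp: space_PiM PiE_def)
      have "indicator (PiE I A) y = (\<Prod>i\<in>I. indicator (A i) (y i) :: ennreal)"
      proof (cases "y \<in> PiE I A")
        case True then show ?thesis by (auto simp: indicator_def PiE_def Pi_def)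
      next
        case False
        then obtain i where "i \<in> I" "y i \<notin> A i" using ext by (auto simp: PiE_def Pi_def)
        then have "(\<Prod>i\<in>I. indicator (A i) (y i) :: ennreal) = 0"
          using I by (intro prod_zero) (auto intro!: bexI[of _ i])
        then show ?thesis using False by simp
      qed
      then show "(\<Prod>i\<in>I. ennreal (normal_density (\<mu> i) s (y i))) * indicator (PiE I A) y
          = (\<Prod>i\<in>I. ennreal (normal_density (\<mu> i) s (y i)) * indicator (A i) (y i))"
        by (simp add: prod.distrib)
    qed
    also have "\<dots> = (\<Prod>i\<in>I. \<integral>\<^sup>+t. ennreal (normal_density (\<mu> i) s t) * indicator (A i) t \<partial>lborel)"
      using A' by (subst L.product_nn_integral_prod[OF I]) auto
    also have "\<dots> = (\<Prod>i\<in>I. emeasure (density lborel (normal_density (\<mu> i) s)) (A i))"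
      using A' by (intro prod.cong refl) (subst emeasure_density, auto)
    finally show "emeasure (density (PiM I (\<lambda>_. lborel)) (\<lambda>y. \<Prod>i\<in>I. ennreal (normal_density (\<mu> i) s (y i)))) (PiE I A)
       = (\<Prod>i\<in>I. emeasure (density lborel (normal_density (\<mu> i) s)) (A i))" .
  qed
qed


lemma shift_measurable[measurable]:
  "(\<lambda>z. \<lambda>i\<in>I. z i + m i) \<in> measurable (PiM I (\<lambda>_. density lborel (normal_density 0 s))) (PiM I (\<lambda>_. lborel :: real measure))"
proof (rule measurable_restrict)
  fix i assume [measurable]: "i \<in> I"
  have "(\<lambda>z. z i) \<in> measurable (PiM I (\<lambda>_. density lborel (normal_density 0 s))) borel"
    using measurable_component_singleton[of i I "\<lambda>_. density lborel (normal_density 0 s)"] by simp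
  then show "(\<lambda>z. z i + m i) \<in> measurable (PiM I (\<lambda>_. density lborel (normal_density 0 s))) lborel"
    unfolding measurable_lborel2 by measurable
qed

lemma distr_shift_noise:
  assumes I: "finite I" and s: "0 < s"
  shows "distr (PiM I (\<lambda>_. density lborel (normal_density 0 s))) (PiM I (\<lambda>_. lborel)) (\<lambda>z. \<lambda>i\<in>I. z i + m i)
       = PiM I (\<lambda>i. density lborel (normal_density (m i) s))"
proof -
  interpret P: product_sigma_finite "\<lambda>i. density lborel (normal_density (m i) s)"
    using psf_normal[OF s] .
  interpret P0: product_sigma_finite "\<lambda>i::'a. density lborel (normal_density 0 s)"
    using psf_normal[OF s, of "\<lambda>_. 0"] .
  show ?thesis
  proof (rule P.PiM_eqI[OF I])
    show "sets (distr (PiM I (\<lambda>_. density lborel (normal_density 0 s))) (PiM I (\<lambda>_. lborel)) (\<lambda>z. \<lambda>i\<in>I. z i + m i))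
        = sets (PiM I (\<lambda>i. density lborel (normal_density (m i) s)))"
      by (auto intro!: sets_PiM_cong)
  next
    fix A assume A: "\<And>i. i \<in> I \<Longrightarrow> A i \<in> sets (density lborel (normal_density (m i) s))"
    then have A'[measurable]: "\<And>i. i \<in> I \<Longrightarrow> A i \<in> sets borel" by auto
    have PA: "PiE I A \<in> sets (PiM I (\<lambda>_. lborel))"
      using A' by (intro sets_PiM_I_finite I) auto
    have pre: "(\<lambda>z. \<lambda>i\<in>I. z i + m i) -` PiE I A \<inter> space (PiM I (\<lambda>_. density lborel (normal_density 0 s)))
        = PiE I (\<lambda>i. {t. t + m i \<in> A i})"
      by (auto simp: space_PiM PiE_def Pi_def extensional_def)
    have "emeasure (distr (PiM I (\<lambda>_. density lborel (normal_density 0 s))) (PiM I (\<lambda>_. lborel)) (\<lambda>z. \<lambda>i\<in>I. z i + m i)) (PiE I A)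
       = emeasure (PiM I (\<lambda>_. density lborel (normal_density 0 s))) (PiE I (\<lambda>i. {t. t + m i \<in> A i}))"
      using PA by (subst emeasure_distr) (auto simp: pre)
    also have "\<dots> = (\<Prod>i\<in>I. emeasure (density lborel (normal_density 0 s)) {t. t + m i \<in> A i})"
      by (rule P0.emeasure_PiM[OF I]) auto
    also have "\<dots> = (\<Prod>i\<in>I. emeasure (density lborel (normal_density (m i) s)) (A i))"
      by (intro prod.cong refl emeasure_shift_normal) auto
    finally show "emeasure (distr (PiM I (\<lambda>_. density lborel (normal_density 0 s))) (PiM I (\<lambda>_. lborel)) (\<lambda>z. \<lambda>i\<in>I. z i + m i)) (PiE I A)
       = (\<Prod>i\<in>I. emeasure (density lborel (normal_density (m i) s)) (A i))" .
  qed
qed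

lemma change_of_measure:
  assumes I: "finite I" and s: "0 < s" and H[measurable]: "H \<in> borel_measurable (PiM I (\<lambda>_. lborel))"
  shows "(\<integral>\<^sup>+z. H (\<lambda>i\<in>I. z i + m i) \<partial>PiM I (\<lambda>_. density lborel (normal_density 0 s)))
       = (\<integral>\<^sup>+y. (\<Prod>i\<in>I. ennreal (normal_density (m i) s (y i))) * H y \<partial>PiM I (\<lambda>_. lborel))"
proof -
  have "(\<integral>\<^sup>+z. H (\<lambda>i\<in>I. z i + m i) \<partial>PiM I (\<lambda>_. density lborel (normal_density 0 s)))
      = (\<integral>\<^sup>+y. H y \<partial>distr (PiM I (\<lambda>_. density lborel (normal_density 0 s))) (PiM I (\<lambda>_. lborel)) (\<lambda>z. \<lambda>i\<in>I. z i + m i))"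
    by (subst nn_integral_distr) auto
  also have "\<dots> = (\<integral>\<^sup>+y. H y \<partial>density (PiM I (\<lambda>_. lborel)) (\<lambda>y. \<Prod>i\<in>I. ennreal (normal_density (m i) s (y i))))"
    by (subst distr_shift_noise[OF I s]) (subst PiM_normal_density[OF I s], rule refl)
  also have "\<dots> = (\<integral>\<^sup>+y. (\<Prod>i\<in>I. ennreal (normal_density (m i) s (y i))) * H y \<partial>PiM I (\<lambda>_. lborel))"
    by (rule nn_integral_density) measurable
  finally show ?thesis .
qed


definition Fset :: "'a set \<Rightarrow> ('a \<Rightarrow> bool) \<Rightarrow> ('a \<Rightarrow> bool) set" where
  "Fset U b = {x. \<forall>ij. ij \<notin> U \<longrightarrow> x ij = b ij}"

lemma finite_Fset: "finite U \<Longrightarrow> finite (Fset U b)"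
proof -
  assume U: "finite U"
  have "Fset U b \<subseteq> (\<lambda>S ij. if ij \<in> U then ij \<in> S else b ij) ` Pow U"
  proof
    fix x assume "x \<in> Fset U b"
    then have "x = (\<lambda>ij. if ij \<in> U then ij \<in> {ij\<in>U. x ij} else b ij)"
      by (auto simp: Fset_def)
    then show "x \<in> (\<lambda>S ij. if ij \<in> U then ij \<in> S else b ij) ` Pow U" by blast
  qed
  then show ?thesis using U by (meson finite_Pow_iff finite_imageI finite_subset)
qed

lemma Fset_insert:
  assumes "a \<notin> U"
  shows "Fset (insert a U) b = Fset U (b(a:=True)) \<union> Fset U (b(a:=False))"
    and "Fset U (b(a:=True)) \<inter> Fset U (b(a:=False)) = {}"
  using assms by (auto simp: Fset_def)

lemma sum_weights_gen:
  fixes q :: real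
  assumes "finite U"
  shows "(\<Sum>x\<in>Fset U b. \<Prod>ij\<in>U. if x ij then q else 1 - q) = 1"
  using assms
proof (induction U arbitrary: b rule: finite_induct)
  case empty
  have "Fset {} b = {b}" by (auto simp: Fset_def)
  then show ?case by simp
next
  case (insert a U)
  have eq: "(\<Sum>x\<in>Fset U (b(a:=c)). \<Prod>ij\<in>insert a U. if x ij then q else 1 - q)
      = (if c then q else 1 - q)" for c
  proof -
    have "(\<Sum>x\<in>Fset U (b(a:=c)). \<Prod>ij\<in>insert a U. if x ij then q else 1 - q)
        = (\<Sum>x\<in>Fset U (b(a:=c)). (if c then q else 1 - q) * (\<Prod>ij\<in>U. if x ij then q else 1 - q))"
      using insert.hyps by (intro sum.cong refl) (auto simp: Fset_def)
    also have "\<dots> = (if c then q else 1 - q)"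
      by (simp add: sum_distrib_left[symmetric] insert.IH)
    finally show ?thesis .
  qed
  have "(\<Sum>x\<in>Fset (insert a U) b. \<Prod>ij\<in>insert a U. if x ij then q else 1 - q)
     = (\<Sum>x\<in>Fset U (b(a:=True)). \<Prod>ij\<in>insert a U. if x ij then q else 1 - q)
       + (\<Sum>x\<in>Fset U (b(a:=False)). \<Prod>ij\<in>insert a U. if x ij then q else 1 - q)"
    unfolding Fset_insert(1)[OF insert.hyps(2)]
    by (rule sum.union_disjoint) (auto simp: finite_Fset insert.hyps Fset_insert(2)[OF insert.hyps(2)])
  also have "\<dots> = 1" by (simp add: eq)
  finally show ?case .
qed


lemma finite_grid[simp]: "finite (grid N)" by (simp add: grid_def)

lemma Xset_Fset: "Xset N = Fset (grid N) (\<lambda>_. False)"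
  by (auto simp: Xset_def Fset_def)

lemma finite_Xset[simp]: "finite (Xset N)"
  by (simp add: Xset_Fset finite_Fset)

lemma finite_Phiset[simp]: "finite (Phiset K N)"
proof -
  have "Phiset K N \<subseteq> Pow (grid N)" by (auto simp: Phiset_def)
  then show ?thesis by (rule finite_subset) simp
qed

lemma sum_PX: "(\<Sum>x\<in>Xset N. PX q N x) = 1"
  unfolding Xset_Fset PX_def by (rule sum_weights_gen) simp

lemma sfset_sub: "sfset N \<phi> \<subseteq> grid N" by (auto simp: sfset_def)

lemma class_Fset:
  assumes "x \<in> Xset N"
  shows "{x' \<in> Xset N. \<forall>mn\<in>sfset N \<phi>. x' mn = x mn}
       = Fset (grid N - sfset N \<phi>) (\<lambda>ij. if ij \<in> sfset N \<phi> then x ij else False)"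
  using assms sfset_sub[of N \<phi>] by (auto simp: Xset_def Fset_def) blast+

lemma sum_wO:
  fixes q :: real
  assumes "x \<in> Xset N"
  shows "(\<Sum>x'\<in>{x' \<in> Xset N. \<forall>mn\<in>sfset N \<phi>. x' mn = x mn}.
            \<Prod>mn\<in>grid N - sfset N \<phi>. if x' mn then q else 1 - q) = 1"
  unfolding class_Fset[OF assms] by (rule sum_weights_gen) simp

lemma PX_split:
  "PX q N x = (\<Prod>mn\<in>sfset N \<phi>. if x mn then q else 1 - q) * (\<Prod>mn\<in>grid N - sfset N \<phi>. if x mn then q else 1 - q)"
  unfolding PX_def by (subst prod.subset_diff[OF sfset_sub[of N \<phi>]]) (auto simp: mult.commute)


lemma double_count:
  fixes wS wO A :: "'a \<Rightarrow> real"
  assumes X: "finite X"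
    and sym: "\<And>x y. x \<in> X \<Longrightarrow> y \<in> X \<Longrightarrow> ag x y \<Longrightarrow> ag y x"
    and trans: "\<And>x y z. x \<in> X \<Longrightarrow> y \<in> X \<Longrightarrow> z \<in> X \<Longrightarrow> ag x y \<Longrightarrow> ag y z \<Longrightarrow> ag x z"
    and wSeq: "\<And>x y. x \<in> X \<Longrightarrow> y \<in> X \<Longrightarrow> ag x y \<Longrightarrow> wS x = wS y"
    and one: "\<And>x. x \<in> X \<Longrightarrow> (\<Sum>x'\<in>{x'\<in>X. ag x x'}. wO x') = 1"
    and nz: "\<And>x. x \<in> X \<Longrightarrow> (\<Sum>x'\<in>{x'\<in>X. ag x x'}. wO x' * A x') \<noteq> 0"
  shows "(\<Sum>x\<in>X. wS x * wO x * A x / (\<Sum>x'\<in>{x'\<in>X. ag x x'}. wO x' * A x'))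
       = (\<Sum>x\<in>X. wS x * wO x)"
proof -
  define B where "B x = (\<Sum>x'\<in>{x'\<in>X. ag x x'}. wO x' * A x')" for x
  have Beq: "B x = B y" if "x \<in> X" "y \<in> X" "ag x y" for x y
  proof -
    have "{x'\<in>X. ag x x'} = {x'\<in>X. ag y x'}"
      using that sym trans by blast
    then show ?thesis by (simp add: B_def)
  qed
  have Bsum: "B x = (\<Sum>x'\<in>X. if ag x x' then wO x' * A x' else 0)" for x
    unfolding B_def using X by (simp add: sum.inter_filter)
  have onesum: "(\<Sum>x'\<in>X. if ag x x' then wO x' else 0) = 1" if "x \<in> X" for x
    using one[OF that] X by (simp add: sum.inter_filter)
  have "(\<Sum>x\<in>X. wS x * wO x * A x / B x)
      = (\<Sum>x\<in>X. wS x * wO x * A x / B x * (\<Sum>x''\<in>X. if ag x x'' then wO x'' else 0))"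
    by (intro sum.cong refl) (simp add: onesum)
  also have "\<dots> = (\<Sum>x\<in>X. \<Sum>x''\<in>X. if ag x x'' then wS x * wO x * A x / B x * wO x'' else 0)"
    by (simp add: sum_distrib_left if_distrib cong: if_cong)
  also have "\<dots> = (\<Sum>x''\<in>X. \<Sum>x\<in>X. if ag x x'' then wS x * wO x * A x / B x * wO x'' else 0)"
    by (rule sum.swap)
  also have "\<dots> = (\<Sum>x''\<in>X. \<Sum>x\<in>X. wS x'' * wO x'' / B x'' * (if ag x'' x then wO x * A x else 0))"
  proof (intro sum.cong refl)
    fix x'' x assume h: "x'' \<in> X" "x \<in> X"
    show "(if ag x x'' then wS x * wO x * A x / B x * wO x'' else 0)
        = wS x'' * wO x'' / B x'' * (if ag x'' x then wO x * A x else 0)"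
      using h sym[OF h(2) h(1)] sym[OF h(1) h(2)] wSeq[OF h(2) h(1)] Beq[OF h(2) h(1)] by auto
  qed
  also have "\<dots> = (\<Sum>x''\<in>X. wS x'' * wO x'' / B x'' * B x'')"
    by (simp add: Bsum sum_distrib_left)
  also have "\<dots> = (\<Sum>x\<in>X. wS x * wO x)"
    using nz by (intro sum.cong refl) (simp add: B_def)
  finally show ?thesis unfolding B_def .
qed


lemma w_pos: "0 < q \<Longrightarrow> q < 1 \<Longrightarrow> 0 < (if b then q else 1 - (q::real))" by auto

lemma A_pos: "0 < \<sigma> \<Longrightarrow> 0 < PYgXPhi R0 R1 Rs \<sigma> N y x \<phi>"
  unfolding PYgXPhi_def by (intro prod_pos normal_density_pos)

lemma wO_pos: "0 < q \<Longrightarrow> q < 1 \<Longrightarrow> 0 < (\<Prod>mn\<in>U. if x mn then q else 1 - (q::real))"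
  by (intro prod_pos) auto

lemma B_pos:
  assumes "0 < \<sigma>" "0 < q" "q < 1" "x \<in> Xset N"
  shows "0 < PYgXsfPhi R0 R1 Rs \<sigma> q N y x \<phi>"
proof -
  let ?T = "{x' \<in> Xset N. \<forall>mn\<in>sfset N \<phi>. x' mn = x mn}"
  let ?f = "\<lambda>x'. (\<Prod>mn\<in>grid N - sfset N \<phi>. if x' mn then q else 1 - q) * PYgXPhi R0 R1 Rs \<sigma> N y x' \<phi>"
  have "x \<in> ?T" using assms by auto
  moreover have "\<forall>x'\<in>?T. 0 \<le> ?f x'" using assms
    by (auto intro!: mult_nonneg_nonneg less_imp_le[OF wO_pos] less_imp_le[OF A_pos])
  moreover have "0 < ?f x" using assms by (intro mult_pos_pos wO_pos A_pos)
  ultimately have "?f x \<le> sum ?f ?T"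
    by (intro member_le_sum) auto
  with \<open>0 < ?f x\<close> show ?thesis unfolding PYgXsfPhi_def by linarith
qed

lemma pointwise_one:
  assumes s: "0 < \<sigma>" and q: "0 < q" "q < 1"
  shows "(\<Sum>x\<in>Xset N. PX q N x * PYgXPhi R0 R1 Rs \<sigma> N y x \<phi> / PYgXsfPhi R0 R1 Rs \<sigma> q N y x \<phi>) = 1"
proof -
  let ?S = "sfset N \<phi>"
  define wS where "wS x = (\<Prod>mn\<in>?S. if x mn then q else 1 - q)" for x :: bmat
  define wO where "wO x = (\<Prod>mn\<in>grid N - ?S. if x mn then q else 1 - q)" for x :: bmat
  define A where "A x = PYgXPhi R0 R1 Rs \<sigma> N y x \<phi>" for x
  define ag where "ag x x' = (\<forall>mn\<in>?S. x' mn = x mn)" for x x' :: bmat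
  have B: "PYgXsfPhi R0 R1 Rs \<sigma> q N y x \<phi> = (\<Sum>x'\<in>{x'\<in>Xset N. ag x x'}. wO x' * A x')" for x
    unfolding PYgXsfPhi_def wO_def A_def ag_def ..
  have "(\<Sum>x\<in>Xset N. PX q N x * PYgXPhi R0 R1 Rs \<sigma> N y x \<phi> / PYgXsfPhi R0 R1 Rs \<sigma> q N y x \<phi>)
      = (\<Sum>x\<in>Xset N. wS x * wO x * A x / (\<Sum>x'\<in>{x'\<in>Xset N. ag x x'}. wO x' * A x'))"
    by (simp add: B PX_split[of q N _ \<phi>] wS_def wO_def A_def)
  also have "\<dots> = (\<Sum>x\<in>Xset N. wS x * wO x)"
  proof (rule double_count)
    show "\<And>x. x \<in> Xset N \<Longrightarrow> (\<Sum>x'\<in>{x'\<in>Xset N. ag x x'}. wO x') = 1"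
      unfolding ag_def wO_def by (rule sum_wO)
    show "\<And>x. x \<in> Xset N \<Longrightarrow> (\<Sum>x'\<in>{x'\<in>Xset N. ag x x'}. wO x' * A x') \<noteq> 0"
      using B_pos[OF s q] B by (metis less_irrefl)
    show "\<And>x y. x \<in> Xset N \<Longrightarrow> y \<in> Xset N \<Longrightarrow> ag x y \<Longrightarrow> wS x = wS y"
      unfolding ag_def wS_def by (auto intro!: prod.cong)
  qed (auto simp: ag_def)
  also have "\<dots> = 1"
    using sum_PX[of q N] by (simp add: PX_split[of q N _ \<phi>] wS_def wO_def)
  finally show ?thesis .
qed


lemma card_grid: "card (grid N) = N\<^sup>2"
  by (simp add: grid_def card_cartesian_product power2_eq_square)

lemma PPhi_nonneg:
  assumes "\<And>k. k \<le> K \<Longrightarrow> 0 \<le> p k" "\<phi> \<in> Phiset K N"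
  shows "0 \<le> PPhi p N \<phi>"
  using assms unfolding PPhi_def Phiset_def by auto

lemma sum_PPhi:
  "(\<Sum>\<phi>\<in>Phiset K N. PPhi p N \<phi>) = (\<Sum>k\<le>K. if k \<le> N\<^sup>2 then p k else 0)"
proof -
  have "(\<Sum>\<phi>\<in>Phiset K N. PPhi p N \<phi>)
      = (\<Sum>k\<le>K. \<Sum>\<phi>\<in>{\<phi>. \<phi> \<in> Phiset K N \<and> card \<phi> = k}. PPhi p N \<phi>)"
    by (rule sum.group[symmetric]) (auto simp: Phiset_def)
  also have "\<dots> = (\<Sum>k\<le>K. if k \<le> N\<^sup>2 then p k else 0)"
  proof (intro sum.cong refl)
    fix k assume k: "k \<in> {..K}"
    have set: "{\<phi>. \<phi> \<in> Phiset K N \<and> card \<phi> = k} = {B. B \<subseteq> grid N \<and> card B = k}"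
      using k by (auto simp: Phiset_def)
    have "(\<Sum>\<phi>\<in>{\<phi>. \<phi> \<in> Phiset K N \<and> card \<phi> = k}. PPhi p N \<phi>)
        = (\<Sum>\<phi>\<in>{B. B \<subseteq> grid N \<and> card B = k}. p k / real (N\<^sup>2 choose k))"
      unfolding set by (intro sum.cong refl) (auto simp: PPhi_def)
    also have "\<dots> = real (N\<^sup>2 choose k) * (p k / real (N\<^sup>2 choose k))"
      by (simp add: n_subsets card_grid)
    also have "\<dots> = (if k \<le> N\<^sup>2 then p k else 0)"
      by auto
    finally show "(\<Sum>\<phi>\<in>{\<phi>. \<phi> \<in> Phiset K N \<and> card \<phi> = k}. PPhi p N \<phi>) = (if k \<le> N\<^sup>2 then p k else 0)" .
  qed
  finally show ?thesis .
qed

lemma sum_PPhi_le: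
  assumes "\<And>k. k \<le> K \<Longrightarrow> 0 \<le> p k" "(\<Sum>k\<le>K. p k) = 1"
  shows "(\<Sum>\<phi>\<in>Phiset K N. PPhi p N \<phi>) \<le> 1"
proof -
  have "(\<Sum>k\<le>K. if k \<le> N\<^sup>2 then p k else 0) \<le> (\<Sum>k\<le>K. p k)"
    using assms(1) by (intro sum_mono) auto
  then show ?thesis using assms(2) by (simp add: sum_PPhi)
qed

lemma sum_PPhi_eq:
  assumes "(\<Sum>k\<le>K. p k) = 1" "K \<le> N\<^sup>2"
  shows "(\<Sum>\<phi>\<in>Phiset K N. PPhi p N \<phi>) = 1"
  using assms by (simp add: sum_PPhi)

lemma sum_PPhi_nonneg:
  assumes "\<And>k. k \<le> K \<Longrightarrow> 0 \<le> p k"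
  shows "0 \<le> (\<Sum>\<phi>\<in>Phiset K N. PPhi p N \<phi>)"
  using assms by (intro sum_nonneg PPhi_nonneg)


abbreviation "LL N \<equiv> PiM (grid N) (\<lambda>_. lborel :: real measure)"

lemma meas_A[measurable]: "(\<lambda>y. PYgXPhi R0 R1 Rs \<sigma> N y x \<phi>) \<in> borel_measurable (LL N)"
  unfolding PYgXPhi_def by measurable

lemma meas_W[measurable]: "(\<lambda>y. WPhi R0 R1 Rs \<sigma> p K N y x) \<in> borel_measurable (LL N)"
  unfolding WPhi_def by measurable

lemma meas_P[measurable]: "(\<lambda>y. PY R0 R1 Rs \<sigma> q p K N y) \<in> borel_measurable (LL N)"
  unfolding PY_def by measurable

lemma meas_B[measurable]: "(\<lambda>y. PYgXsfPhi R0 R1 Rs \<sigma> q N y x \<phi>) \<in> borel_measurable (LL N)"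
  unfolding PYgXsfPhi_def by measurable

lemma restr_A: "PYgXPhi R0 R1 Rs \<sigma> N (restrict y (grid N)) x \<phi> = PYgXPhi R0 R1 Rs \<sigma> N y x \<phi>"
  unfolding PYgXPhi_def by (intro prod.cong) auto

lemma restr_W: "WPhi R0 R1 Rs \<sigma> p K N (restrict y (grid N)) x = WPhi R0 R1 Rs \<sigma> p K N y x"
  unfolding WPhi_def by (simp add: restr_A)

lemma restr_P: "PY R0 R1 Rs \<sigma> q p K N (restrict y (grid N)) = PY R0 R1 Rs \<sigma> q p K N y"
  unfolding PY_def by (simp add: restr_W)

lemma restr_B: "PYgXsfPhi R0 R1 Rs \<sigma> q N (restrict y (grid N)) x \<phi> = PYgXsfPhi R0 R1 Rs \<sigma> q N y x \<phi>"
  unfolding PYgXsfPhi_def by (simp add: restr_A)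

lemma restr_Yout: "restrict (Yout R0 R1 Rs x \<phi> z) (grid N) = (\<lambda>i\<in>grid N. z i + meanY R0 R1 Rs x \<phi> i)"
  by (auto simp: Yout_def restrict_def fun_eq_iff)

lemma int_A:
  assumes s: "0 < \<sigma>"
  shows "(\<integral>\<^sup>+y. ennreal (PYgXPhi R0 R1 Rs \<sigma> N y x \<phi>) \<partial>LL N) = 1"
proof -
  let ?m = "meanY R0 R1 Rs x \<phi>"
  have "(\<integral>\<^sup>+y. ennreal (PYgXPhi R0 R1 Rs \<sigma> N y x \<phi>) \<partial>LL N)
      = (\<integral>\<^sup>+y. (\<Prod>i\<in>grid N. ennreal (normal_density (?m i) \<sigma> (y i))) * indicator (space (LL N)) y \<partial>LL N)"
    unfolding PYgXPhi_def by (intro nn_integral_cong) (simp add: prod_ennreal)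
  also have "\<dots> = emeasure (density (LL N) (\<lambda>y. \<Prod>i\<in>grid N. ennreal (normal_density (?m i) \<sigma> (y i)))) (space (LL N))"
    by (subst emeasure_density) auto
  also have "\<dots> = emeasure (PiM (grid N) (\<lambda>i. density lborel (normal_density (?m i) \<sigma>))) (space (PiM (grid N) (\<lambda>i. density lborel (normal_density (?m i) \<sigma>))))"
    by (subst PiM_normal_density[OF finite_grid s]) (simp add: space_PiM)
  also have "\<dots> = 1"
    by (intro prob_space.emeasure_space_1 prob_space_PiM ps_normal s)
  finally show ?thesis .
qed


lemma noise_int:
  assumes s: "0 < \<sigma>" and H[measurable]: "H \<in> borel_measurable (LL N)"
    and Hr: "\<And>y. H (restrict y (grid N)) = H y"
  shows "(\<integral>\<^sup>+z. H (Yout R0 R1 Rs x \<phi> z) \<partial>Noise_law \<sigma> N)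
       = (\<integral>\<^sup>+y. ennreal (PYgXPhi R0 R1 Rs \<sigma> N y x \<phi>) * H y \<partial>LL N)"
proof -
  have "(\<integral>\<^sup>+z. H (Yout R0 R1 Rs x \<phi> z) \<partial>Noise_law \<sigma> N)
      = (\<integral>\<^sup>+z. H (\<lambda>i\<in>grid N. z i + meanY R0 R1 Rs x \<phi> i) \<partial>Noise_law \<sigma> N)"
    by (intro nn_integral_cong) (metis Hr restr_Yout)
  also have "\<dots> = (\<integral>\<^sup>+y. (\<Prod>i\<in>grid N. ennreal (normal_density (meanY R0 R1 Rs x \<phi> i) \<sigma> (y i))) * H y \<partial>LL N)"
    unfolding Noise_law_def by (rule change_of_measure[OF finite_grid s H])
  also have "\<dots> = (\<integral>\<^sup>+y. ennreal (PYgXPhi R0 R1 Rs \<sigma> N y x \<phi>) * H y \<partial>LL N)"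
    unfolding PYgXPhi_def by (intro nn_integral_cong) (simp add: prod_ennreal)
  finally show ?thesis .
qed

lemma int_W:
  assumes s: "0 < \<sigma>" and pnn: "\<And>k. k \<le> K \<Longrightarrow> 0 \<le> p k"
  shows "(\<integral>\<^sup>+y. ennreal (WPhi R0 R1 Rs \<sigma> p K N y x) \<partial>LL N) = ennreal (\<Sum>\<phi>\<in>Phiset K N. PPhi p N \<phi>)"
proof -
  have "(\<integral>\<^sup>+y. ennreal (WPhi R0 R1 Rs \<sigma> p K N y x) \<partial>LL N)
      = (\<integral>\<^sup>+y. (\<Sum>\<phi>\<in>Phiset K N. ennreal (PPhi p N \<phi>) * ennreal (PYgXPhi R0 R1 Rs \<sigma> N y x \<phi>)) \<partial>LL N)"
    unfolding WPhi_def
    by (intro nn_integral_cong)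
       (auto simp: ennreal_mult[symmetric] PPhi_nonneg[OF pnn] less_imp_le[OF A_pos[OF s]]
             intro!: sum_ennreal[symmetric] mult_nonneg_nonneg)
  also have "\<dots> = (\<Sum>\<phi>\<in>Phiset K N. ennreal (PPhi p N \<phi>) * (\<integral>\<^sup>+y. ennreal (PYgXPhi R0 R1 Rs \<sigma> N y x \<phi>) \<partial>LL N))"
    by (subst nn_integral_sum) (auto simp: nn_integral_cmult)
  also have "\<dots> = ennreal (\<Sum>\<phi>\<in>Phiset K N. PPhi p N \<phi>)"
    by (simp add: int_A[OF s] PPhi_nonneg[OF pnn])
  finally show ?thesis .
qed

lemma int_P:
  assumes s: "0 < \<sigma>" and pnn: "\<And>k. k \<le> K \<Longrightarrow> 0 \<le> p k" and q: "0 < q" "q < 1"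
  shows "(\<integral>\<^sup>+y. ennreal (PY R0 R1 Rs \<sigma> q p K N y) \<partial>LL N) = ennreal (\<Sum>\<phi>\<in>Phiset K N. PPhi p N \<phi>)"
proof -
  have PXnn: "0 \<le> PX q N x" for x unfolding PX_def using q by (intro prod_nonneg) auto
  have Wnn: "0 \<le> WPhi R0 R1 Rs \<sigma> p K N y x" for y x
    unfolding WPhi_def using s
    by (intro sum_nonneg mult_nonneg_nonneg PPhi_nonneg[OF pnn] less_imp_le[OF A_pos]) auto
  have "(\<integral>\<^sup>+y. ennreal (PY R0 R1 Rs \<sigma> q p K N y) \<partial>LL N)
      = (\<integral>\<^sup>+y. (\<Sum>x\<in>Xset N. ennreal (PX q N x) * ennreal (WPhi R0 R1 Rs \<sigma> p K N y x)) \<partial>LL N)"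
    unfolding PY_def
    by (intro nn_integral_cong)
       (auto simp: ennreal_mult[symmetric] PXnn Wnn intro!: sum_ennreal[symmetric] mult_nonneg_nonneg)
  also have "\<dots> = (\<Sum>x\<in>Xset N. ennreal (PX q N x) * (\<integral>\<^sup>+y. ennreal (WPhi R0 R1 Rs \<sigma> p K N y x) \<partial>LL N))"
    by (subst nn_integral_sum) (auto simp: nn_integral_cmult)
  also have "\<dots> = (\<Sum>x\<in>Xset N. ennreal (PX q N x)) * ennreal (\<Sum>\<phi>\<in>Phiset K N. PPhi p N \<phi>)"
    by (simp add: int_W[OF s pnn] sum_distrib_right)
  also have "\<dots> = ennreal (\<Sum>\<phi>\<in>Phiset K N. PPhi p N \<phi>)"
    by (simp add: PXnn sum_PX)
  finally show ?thesis .
qed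


lemma E_W:
  assumes s: "0 < \<sigma>" and pnn: "\<And>k. k \<le> K \<Longrightarrow> 0 \<le> p k" and ps: "(\<Sum>k\<le>K. p k) = 1"
  shows "(\<integral>\<^sup>+z. ennreal (WPhi R0 R1 Rs \<sigma> p K N (Yout R0 R1 Rs x \<phi> z) x
             / PYgXPhi R0 R1 Rs \<sigma> N (Yout R0 R1 Rs x \<phi> z) x \<phi>) \<partial>Noise_law \<sigma> N) \<le> 1"
proof -
  have "(\<integral>\<^sup>+z. ennreal (WPhi R0 R1 Rs \<sigma> p K N (Yout R0 R1 Rs x \<phi> z) x
             / PYgXPhi R0 R1 Rs \<sigma> N (Yout R0 R1 Rs x \<phi> z) x \<phi>) \<partial>Noise_law \<sigma> N)
      = (\<integral>\<^sup>+y. ennreal (PYgXPhi R0 R1 Rs \<sigma> N y x \<phi>) * ennreal (WPhi R0 R1 Rs \<sigma> p K N y x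
             / PYgXPhi R0 R1 Rs \<sigma> N y x \<phi>) \<partial>LL N)"
    by (rule noise_int[OF s, where H="\<lambda>y. ennreal (WPhi R0 R1 Rs \<sigma> p K N y x / PYgXPhi R0 R1 Rs \<sigma> N y x \<phi>)"])
       (auto simp: restr_W restr_A)
  also have "\<dots> = (\<integral>\<^sup>+y. ennreal (WPhi R0 R1 Rs \<sigma> p K N y x) \<partial>LL N)"
  proof (intro nn_integral_cong)
    fix y
    have "0 < PYgXPhi R0 R1 Rs \<sigma> N y x \<phi>" by (rule A_pos[OF s])
    then show "ennreal (PYgXPhi R0 R1 Rs \<sigma> N y x \<phi>) * ennreal (WPhi R0 R1 Rs \<sigma> p K N y x / PYgXPhi R0 R1 Rs \<sigma> N y x \<phi>)
        = ennreal (WPhi R0 R1 Rs \<sigma> p K N y x)"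
      by (simp add: ennreal_mult'[symmetric])
  qed
  also have "\<dots> \<le> 1"
    by (simp add: int_W[OF s pnn] sum_PPhi_le[OF pnn ps])
  finally show ?thesis .
qed

lemma E_P:
  assumes s: "0 < \<sigma>" and pnn: "\<And>k. k \<le> K \<Longrightarrow> 0 \<le> p k" and ps: "(\<Sum>k\<le>K. p k) = 1"
    and q: "0 < q" "q < 1"
  shows "(\<Sum>x\<in>Xset N. ennreal (PX q N x) * (\<integral>\<^sup>+z. ennreal (PY R0 R1 Rs \<sigma> q p K N (Yout R0 R1 Rs x \<phi> z)
             / PYgXsfPhi R0 R1 Rs \<sigma> q N (Yout R0 R1 Rs x \<phi> z) x \<phi>) \<partial>Noise_law \<sigma> N)) \<le> 1"
proof -
  have PXnn: "0 \<le> PX q N x" for x unfolding PX_def using q by (intro prod_nonneg) auto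
  have Pnn: "0 \<le> PY R0 R1 Rs \<sigma> q p K N y" for y
    unfolding PY_def WPhi_def using s q
    by (intro sum_nonneg mult_nonneg_nonneg PPhi_nonneg[OF pnn] less_imp_le[OF A_pos] PXnn) auto
  have Bp: "x \<in> Xset N \<Longrightarrow> 0 < PYgXsfPhi R0 R1 Rs \<sigma> q N y x \<phi>" for x y
    by (rule B_pos[OF s q])
  have Ap: "0 < PYgXPhi R0 R1 Rs \<sigma> N y x \<phi>" for x y by (rule A_pos[OF s])
  have "(\<Sum>x\<in>Xset N. ennreal (PX q N x) * (\<integral>\<^sup>+z. ennreal (PY R0 R1 Rs \<sigma> q p K N (Yout R0 R1 Rs x \<phi> z)
             / PYgXsfPhi R0 R1 Rs \<sigma> q N (Yout R0 R1 Rs x \<phi> z) x \<phi>) \<partial>Noise_law \<sigma> N))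
      = (\<Sum>x\<in>Xset N. ennreal (PX q N x) * (\<integral>\<^sup>+y. ennreal (PYgXPhi R0 R1 Rs \<sigma> N y x \<phi>) *
            ennreal (PY R0 R1 Rs \<sigma> q p K N y / PYgXsfPhi R0 R1 Rs \<sigma> q N y x \<phi>) \<partial>LL N))"
    by (intro sum.cong refl arg_cong2[where f="(*)"] noise_int[OF s]) (auto simp: restr_P restr_B)
  also have "\<dots> = (\<integral>\<^sup>+y. (\<Sum>x\<in>Xset N. ennreal (PX q N x) * (ennreal (PYgXPhi R0 R1 Rs \<sigma> N y x \<phi>) *
            ennreal (PY R0 R1 Rs \<sigma> q p K N y / PYgXsfPhi R0 R1 Rs \<sigma> q N y x \<phi>))) \<partial>LL N)"
    by (subst nn_integral_sum) (auto simp: nn_integral_cmult)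
  also have "\<dots> = (\<integral>\<^sup>+y. ennreal (PY R0 R1 Rs \<sigma> q p K N y *
       (\<Sum>x\<in>Xset N. PX q N x * PYgXPhi R0 R1 Rs \<sigma> N y x \<phi> / PYgXsfPhi R0 R1 Rs \<sigma> q N y x \<phi>)) \<partial>LL N)"
  proof (intro nn_integral_cong)
    fix y
    have "(\<Sum>x\<in>Xset N. ennreal (PX q N x) * (ennreal (PYgXPhi R0 R1 Rs \<sigma> N y x \<phi>) *
            ennreal (PY R0 R1 Rs \<sigma> q p K N y / PYgXsfPhi R0 R1 Rs \<sigma> q N y x \<phi>)))
        = (\<Sum>x\<in>Xset N. ennreal (PY R0 R1 Rs \<sigma> q p K N y * (PX q N x * PYgXPhi R0 R1 Rs \<sigma> N y x \<phi> / PYgXsfPhi R0 R1 Rs \<sigma> q N y x \<phi>)))"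
    proof (intro sum.cong refl)
      fix x assume x: "x \<in> Xset N"
      have "ennreal (PX q N x) * (ennreal (PYgXPhi R0 R1 Rs \<sigma> N y x \<phi>) *
            ennreal (PY R0 R1 Rs \<sigma> q p K N y / PYgXsfPhi R0 R1 Rs \<sigma> q N y x \<phi>))
          = ennreal (PX q N x * (PYgXPhi R0 R1 Rs \<sigma> N y x \<phi> *
            (PY R0 R1 Rs \<sigma> q p K N y / PYgXsfPhi R0 R1 Rs \<sigma> q N y x \<phi>)))"
        by (simp only: ennreal_mult'[OF PXnn[of x]] ennreal_mult'[OF less_imp_le[OF Ap[of y x]]])
      then show "ennreal (PX q N x) * (ennreal (PYgXPhi R0 R1 Rs \<sigma> N y x \<phi>) *
            ennreal (PY R0 R1 Rs \<sigma> q p K N y / PYgXsfPhi R0 R1 Rs \<sigma> q N y x \<phi>))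
          = ennreal (PY R0 R1 Rs \<sigma> q p K N y * (PX q N x * PYgXPhi R0 R1 Rs \<sigma> N y x \<phi> / PYgXsfPhi R0 R1 Rs \<sigma> q N y x \<phi>))"
        by (simp add: field_simps)
    qed
    also have "\<dots> = ennreal (\<Sum>x\<in>Xset N. PY R0 R1 Rs \<sigma> q p K N y * (PX q N x * PYgXPhi R0 R1 Rs \<sigma> N y x \<phi> / PYgXsfPhi R0 R1 Rs \<sigma> q N y x \<phi>))"
      by (intro sum_ennreal) (auto intro!: mult_nonneg_nonneg divide_nonneg_nonneg simp: Pnn PXnn less_imp_le[OF Ap] less_imp_le[OF Bp])
    finally show "(\<Sum>x\<in>Xset N. ennreal (PX q N x) * (ennreal (PYgXPhi R0 R1 Rs \<sigma> N y x \<phi>) *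
            ennreal (PY R0 R1 Rs \<sigma> q p K N y / PYgXsfPhi R0 R1 Rs \<sigma> q N y x \<phi>)))
        = ennreal (PY R0 R1 Rs \<sigma> q p K N y *
       (\<Sum>x\<in>Xset N. PX q N x * PYgXPhi R0 R1 Rs \<sigma> N y x \<phi> / PYgXsfPhi R0 R1 Rs \<sigma> q N y x \<phi>))"
      by (simp add: sum_distrib_left)
  qed
  also have "\<dots> = (\<integral>\<^sup>+y. ennreal (PY R0 R1 Rs \<sigma> q p K N y) \<partial>LL N)"
    by (simp add: pointwise_one[OF s q])
  also have "\<dots> \<le> 1"
    by (simp add: int_P[OF s pnn q] sum_PPhi_le[OF pnn ps])
  finally show ?thesis .
qed


lemma sets_XPhi: "sets (XPhi_law q p K N) = sets (count_space (Xset N \<times> Phiset K N))"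
  by (simp add: XPhi_law_def)

lemma space_XPhi: "space (XPhi_law q p K N) = Xset N \<times> Phiset K N"
  by (simp add: XPhi_law_def)

lemma prob_Noise: "0 < \<sigma> \<Longrightarrow> prob_space (Noise_law \<sigma> N)"
  unfolding Noise_law_def by (intro prob_space_PiM ps_normal)

lemma space_Omega: "space (Omega \<sigma> q p K N) = (Xset N \<times> Phiset K N) \<times> space (Noise_law \<sigma> N)"
  by (simp add: Omega_def space_pair_measure space_XPhi)

lemma meas_Omega:
  assumes "\<And>d. d \<in> Xset N \<times> Phiset K N \<Longrightarrow> (\<lambda>z. f (d, z)) \<in> measurable (Noise_law \<sigma> N) M"
  shows "f \<in> measurable (Omega \<sigma> q p K N) M"
  unfolding Omega_def
  by (subst measurable_cong_sets[OF sets_pair_measure_cong[OF sets_XPhi refl] refl])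
     (rule measurable_pair_measure_countable1[OF countable_finite assms], auto)

lemma Omega_nn_integral:
  assumes s: "0 < \<sigma>" and f[measurable]: "f \<in> borel_measurable (Omega \<sigma> q p K N)"
  shows "(\<integral>\<^sup>+\<omega>. f \<omega> \<partial>Omega \<sigma> q p K N)
       = (\<Sum>d\<in>Xset N \<times> Phiset K N. ennreal (PX q N (fst d) * PPhi p N (snd d)) * (\<integral>\<^sup>+z. f (d, z) \<partial>Noise_law \<sigma> N))"
proof -
  interpret NS: prob_space "Noise_law \<sigma> N" by (rule prob_Noise[OF s])
  have f': "f \<in> borel_measurable (XPhi_law q p K N \<Otimes>\<^sub>M Noise_law \<sigma> N)"
    using f by (simp add: Omega_def)
  have "(\<integral>\<^sup>+\<omega>. f \<omega> \<partial>Omega \<sigma> q p K N) = (\<integral>\<^sup>+d. (\<integral>\<^sup>+z. f (d, z) \<partial>Noise_law \<sigma> N) \<partial>XPhi_law q p K N)"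
    unfolding Omega_def by (rule NS.nn_integral_fst[OF f', symmetric])
  also have "\<dots> = (\<integral>\<^sup>+d. ennreal (PX q N (fst d) * PPhi p N (snd d)) * (\<integral>\<^sup>+z. f (d, z) \<partial>Noise_law \<sigma> N) \<partial>count_space (Xset N \<times> Phiset K N))"
    unfolding XPhi_law_def by (subst nn_integral_density) (auto simp: case_prod_beta)
  also have "\<dots> = (\<Sum>d\<in>Xset N \<times> Phiset K N. ennreal (PX q N (fst d) * PPhi p N (snd d)) * (\<integral>\<^sup>+z. f (d, z) \<partial>Noise_law \<sigma> N))"
    by (rule nn_integral_count_space_finite) simp
  finally show ?thesis .
qed

lemma Omega_space_emeasure:
  assumes s: "0 < \<sigma>" and q: "0 < q" "q < 1" and pnn: "\<And>k. k \<le> K \<Longrightarrow> 0 \<le> p k"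
  shows "emeasure (Omega \<sigma> q p K N) (space (Omega \<sigma> q p K N)) = ennreal (\<Sum>\<phi>\<in>Phiset K N. PPhi p N \<phi>)"
proof -
  interpret NS: prob_space "Noise_law \<sigma> N" by (rule prob_Noise[OF s])
  have PXnn: "0 \<le> PX q N x" for x unfolding PX_def using q by (intro prod_nonneg) auto
  have "emeasure (Omega \<sigma> q p K N) (space (Omega \<sigma> q p K N)) = (\<integral>\<^sup>+\<omega>. 1 \<partial>Omega \<sigma> q p K N)"
    by simp
  also have "\<dots> = (\<Sum>d\<in>Xset N \<times> Phiset K N. ennreal (PX q N (fst d) * PPhi p N (snd d)))"
    by (subst Omega_nn_integral[OF s]) (auto simp: NS.emeasure_space_1)
  also have "\<dots> = ennreal (\<Sum>d\<in>Xset N \<times> Phiset K N. PX q N (fst d) * PPhi p N (snd d))"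
    by (rule sum_ennreal) (auto intro!: mult_nonneg_nonneg PXnn PPhi_nonneg[OF pnn])
  also have "(\<Sum>d\<in>Xset N \<times> Phiset K N. PX q N (fst d) * PPhi p N (snd d)) = (\<Sum>\<phi>\<in>Phiset K N. PPhi p N \<phi>)"
  proof -
    have "(\<Sum>x\<in>Xset N. \<Sum>\<phi>\<in>Phiset K N. PX q N x * PPhi p N \<phi>) = (\<Sum>d\<in>Xset N \<times> Phiset K N. PX q N (fst d) * PPhi p N (snd d))"
      by (simp add: sum.cartesian_product case_prod_beta)
    moreover have "(\<Sum>x\<in>Xset N. \<Sum>\<phi>\<in>Phiset K N. PX q N x * PPhi p N \<phi>) = (\<Sum>x\<in>Xset N. PX q N x) * (\<Sum>\<phi>\<in>Phiset K N. PPhi p N \<phi>)"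
      by (simp add: sum_product)
    ultimately show ?thesis by (simp add: sum_PX)
  qed
  finally show ?thesis .
qed


lemma meas_Yout:
  assumes H[measurable]: "H \<in> borel_measurable (LL N)" and Hr: "\<And>y. H (restrict y (grid N)) = H y"
  shows "(\<lambda>z. H (Yout R0 R1 Rs x \<phi> z)) \<in> borel_measurable (Noise_law \<sigma> N)"
proof -
  have "(\<lambda>z. H (\<lambda>i\<in>grid N. z i + meanY R0 R1 Rs x \<phi> i)) \<in> borel_measurable (Noise_law \<sigma> N)"
    unfolding Noise_law_def by (rule measurable_compose[OF shift_measurable H])
  moreover have "H (Yout R0 R1 Rs x \<phi> z) = H (\<lambda>i\<in>grid N. z i + meanY R0 R1 Rs x \<phi> i)" for z
    by (metis Hr restr_Yout)
  ultimately show ?thesis by simp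
qed

definition UU where
  "UU R0 R1 Rs \<sigma> p K N \<omega> = (let x = fst (fst \<omega>); \<phi> = snd (fst \<omega>); y = Yout R0 R1 Rs x \<phi> (snd \<omega>) in
     ennreal (WPhi R0 R1 Rs \<sigma> p K N y x / PYgXPhi R0 R1 Rs \<sigma> N y x \<phi>)
     + (if PPhi p N \<phi> = 0 then \<infinity> else 0))"

definition VV where
  "VV R0 R1 Rs \<sigma> q p K N \<omega> = (let x = fst (fst \<omega>); \<phi> = snd (fst \<omega>); y = Yout R0 R1 Rs x \<phi> (snd \<omega>) in
     ennreal (PY R0 R1 Rs \<sigma> q p K N y / PYgXsfPhi R0 R1 Rs \<sigma> q N y x \<phi>))"

lemma meas_UU[measurable]: "UU R0 R1 Rs \<sigma> p K N \<in> borel_measurable (Omega \<sigma> q p K N)"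
proof (rule meas_Omega)
  fix d :: "bmat \<times> pattern"
  have "(\<lambda>z. ennreal (WPhi R0 R1 Rs \<sigma> p K N (Yout R0 R1 Rs (fst d) (snd d) z) (fst d)
           / PYgXPhi R0 R1 Rs \<sigma> N (Yout R0 R1 Rs (fst d) (snd d) z) (fst d) (snd d))) \<in> borel_measurable (Noise_law \<sigma> N)"
    by (rule meas_Yout[where H="\<lambda>y. ennreal (WPhi R0 R1 Rs \<sigma> p K N y (fst d) / PYgXPhi R0 R1 Rs \<sigma> N y (fst d) (snd d))"])
       (auto simp: restr_W restr_A)
  then show "(\<lambda>z. UU R0 R1 Rs \<sigma> p K N (d, z)) \<in> borel_measurable (Noise_law \<sigma> N)"
    unfolding UU_def Let_def by simp
qed

lemma meas_VV[measurable]: "VV R0 R1 Rs \<sigma> q p K N \<in> borel_measurable (Omega \<sigma> q p K N)"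
proof (rule meas_Omega)
  fix d :: "bmat \<times> pattern"
  have "(\<lambda>z. ennreal (PY R0 R1 Rs \<sigma> q p K N (Yout R0 R1 Rs (fst d) (snd d) z)
           / PYgXsfPhi R0 R1 Rs \<sigma> q N (Yout R0 R1 Rs (fst d) (snd d) z) (fst d) (snd d))) \<in> borel_measurable (Noise_law \<sigma> N)"
    by (rule meas_Yout[where H="\<lambda>y. ennreal (PY R0 R1 Rs \<sigma> q p K N y / PYgXsfPhi R0 R1 Rs \<sigma> q N y (fst d) (snd d))"])
       (auto simp: restr_P restr_B)
  then show "(\<lambda>z. VV R0 R1 Rs \<sigma> q p K N (d, z)) \<in> borel_measurable (Noise_law \<sigma> N)"
    unfolding VV_def Let_def by simp
qed

lemma int_UU:
  assumes s: "0 < \<sigma>" and q: "0 < q" "q < 1" and pnn: "\<And>k. k \<le> K \<Longrightarrow> 0 \<le> p k" and ps: "(\<Sum>k\<le>K. p k) = 1"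
  shows "(\<integral>\<^sup>+\<omega>. UU R0 R1 Rs \<sigma> p K N \<omega> \<partial>Omega \<sigma> q p K N) \<le> 1"
proof -
  interpret NS: prob_space "Noise_law \<sigma> N" by (rule prob_Noise[OF s])
  have PXnn: "0 \<le> PX q N x" for x unfolding PX_def using q by (intro prod_nonneg) auto
  have "(\<integral>\<^sup>+\<omega>. UU R0 R1 Rs \<sigma> p K N \<omega> \<partial>Omega \<sigma> q p K N)
      = (\<Sum>d\<in>Xset N \<times> Phiset K N. ennreal (PX q N (fst d) * PPhi p N (snd d)) * (\<integral>\<^sup>+z. UU R0 R1 Rs \<sigma> p K N (d, z) \<partial>Noise_law \<sigma> N))"
    by (rule Omega_nn_integral[OF s]) measurable
  also have "\<dots> \<le> (\<Sum>d\<in>Xset N \<times> Phiset K N. ennreal (PX q N (fst d) * PPhi p N (snd d)))"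
  proof (intro sum_mono)
    fix d assume d: "d \<in> Xset N \<times> Phiset K N"
    show "ennreal (PX q N (fst d) * PPhi p N (snd d)) * (\<integral>\<^sup>+z. UU R0 R1 Rs \<sigma> p K N (d, z) \<partial>Noise_law \<sigma> N)
        \<le> ennreal (PX q N (fst d) * PPhi p N (snd d))"
    proof (cases "PPhi p N (snd d) = 0")
      case True then show ?thesis by simp
    next
      case False
      then have "(\<integral>\<^sup>+z. UU R0 R1 Rs \<sigma> p K N (d, z) \<partial>Noise_law \<sigma> N)
          = (\<integral>\<^sup>+z. ennreal (WPhi R0 R1 Rs \<sigma> p K N (Yout R0 R1 Rs (fst d) (snd d) z) (fst d)
             / PYgXPhi R0 R1 Rs \<sigma> N (Yout R0 R1 Rs (fst d) (snd d) z) (fst d) (snd d)) \<partial>Noise_law \<sigma> N)"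
        unfolding UU_def Let_def by simp
      also have "\<dots> \<le> 1" by (rule E_W[OF s pnn ps])
      finally show ?thesis by (simp add: mult_left_le)
    qed
  qed
  also have "\<dots> = ennreal (\<Sum>d\<in>Xset N \<times> Phiset K N. PX q N (fst d) * PPhi p N (snd d))"
    by (rule sum_ennreal) (auto intro!: mult_nonneg_nonneg PXnn PPhi_nonneg[OF pnn])
  also have "(\<Sum>d\<in>Xset N \<times> Phiset K N. PX q N (fst d) * PPhi p N (snd d)) = (\<Sum>\<phi>\<in>Phiset K N. PPhi p N \<phi>)"
  proof -
    have "(\<Sum>x\<in>Xset N. \<Sum>\<phi>\<in>Phiset K N. PX q N x * PPhi p N \<phi>) = (\<Sum>d\<in>Xset N \<times> Phiset K N. PX q N (fst d) * PPhi p N (snd d))"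
      by (simp add: sum.cartesian_product case_prod_beta)
    moreover have "(\<Sum>x\<in>Xset N. \<Sum>\<phi>\<in>Phiset K N. PX q N x * PPhi p N \<phi>) = (\<Sum>x\<in>Xset N. PX q N x) * (\<Sum>\<phi>\<in>Phiset K N. PPhi p N \<phi>)"
      by (simp add: sum_product)
    ultimately show ?thesis by (simp add: sum_PX)
  qed
  also have "ennreal (\<Sum>\<phi>\<in>Phiset K N. PPhi p N \<phi>) \<le> 1"
    using sum_PPhi_le[OF pnn ps] by simp
  finally show ?thesis .
qed

lemma int_VV:
  assumes s: "0 < \<sigma>" and q: "0 < q" "q < 1" and pnn: "\<And>k. k \<le> K \<Longrightarrow> 0 \<le> p k" and ps: "(\<Sum>k\<le>K. p k) = 1"
  shows "(\<integral>\<^sup>+\<omega>. VV R0 R1 Rs \<sigma> q p K N \<omega> \<partial>Omega \<sigma> q p K N) \<le> 1"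
proof -
  have PXnn: "0 \<le> PX q N x" for x unfolding PX_def using q by (intro prod_nonneg) auto
  let ?I = "\<lambda>x \<phi>. (\<integral>\<^sup>+z. ennreal (PY R0 R1 Rs \<sigma> q p K N (Yout R0 R1 Rs x \<phi> z)
             / PYgXsfPhi R0 R1 Rs \<sigma> q N (Yout R0 R1 Rs x \<phi> z) x \<phi>) \<partial>Noise_law \<sigma> N)"
  have "(\<integral>\<^sup>+\<omega>. VV R0 R1 Rs \<sigma> q p K N \<omega> \<partial>Omega \<sigma> q p K N)
      = (\<Sum>d\<in>Xset N \<times> Phiset K N. ennreal (PX q N (fst d) * PPhi p N (snd d)) * (\<integral>\<^sup>+z. VV R0 R1 Rs \<sigma> q p K N (d, z) \<partial>Noise_law \<sigma> N))"
    by (rule Omega_nn_integral[OF s]) measurable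
  also have "\<dots> = (\<Sum>d\<in>Xset N \<times> Phiset K N. ennreal (PPhi p N (snd d)) * (ennreal (PX q N (fst d)) * ?I (fst d) (snd d)))"
    by (intro sum.cong refl)
       (auto simp: VV_def Let_def ennreal_mult[OF PXnn PPhi_nonneg[OF pnn]] mult.assoc mult.left_commute)
  also have "\<dots> = (\<Sum>\<phi>\<in>Phiset K N. ennreal (PPhi p N \<phi>) * (\<Sum>x\<in>Xset N. ennreal (PX q N x) * ?I x \<phi>))"
  proof -
    have "(\<Sum>d\<in>Xset N \<times> Phiset K N. ennreal (PPhi p N (snd d)) * (ennreal (PX q N (fst d)) * ?I (fst d) (snd d)))
        = (\<Sum>x\<in>Xset N. \<Sum>\<phi>\<in>Phiset K N. ennreal (PPhi p N \<phi>) * (ennreal (PX q N x) * ?I x \<phi>))"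
      by (simp add: sum.cartesian_product case_prod_beta)
    also have "\<dots> = (\<Sum>\<phi>\<in>Phiset K N. \<Sum>x\<in>Xset N. ennreal (PPhi p N \<phi>) * (ennreal (PX q N x) * ?I x \<phi>))"
      by (rule sum.swap)
    finally show ?thesis by (simp add: sum_distrib_left)
  qed
  also have "\<dots> \<le> (\<Sum>\<phi>\<in>Phiset K N. ennreal (PPhi p N \<phi>) * 1)"
    by (intro sum_mono mult_left_mono E_P[OF s pnn ps q]) auto
  also have "\<dots> = ennreal (\<Sum>\<phi>\<in>Phiset K N. PPhi p N \<phi>)"
    by (simp add: PPhi_nonneg[OF pnn])
  also have "\<dots> \<le> 1"
    using sum_PPhi_le[OF pnn ps] by simp
  finally show ?thesis .
qed


lemma W_ge:
  assumes s: "0 < \<sigma>" and pnn: "\<And>k. k \<le> K \<Longrightarrow> 0 \<le> p k" and \<phi>: "\<phi> \<in> Phiset K N"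
  shows "PPhi p N \<phi> * PYgXPhi R0 R1 Rs \<sigma> N y x \<phi> \<le> WPhi R0 R1 Rs \<sigma> p K N y x"
  unfolding WPhi_def
  by (rule member_le_sum[OF \<phi>]) (auto intro!: mult_nonneg_nonneg PPhi_nonneg[OF pnn] less_imp_le[OF A_pos[OF s]])

lemma P_ge:
  assumes s: "0 < \<sigma>" and pnn: "\<And>k. k \<le> K \<Longrightarrow> 0 \<le> p k" and \<phi>: "\<phi> \<in> Phiset K N"
    and q: "0 < q" "q < 1" and x: "x \<in> Xset N"
  shows "PPhi p N \<phi> * (\<Prod>mn\<in>sfset N \<phi>. if x mn then q else 1 - q) * PYgXsfPhi R0 R1 Rs \<sigma> q N y x \<phi>
       \<le> PY R0 R1 Rs \<sigma> q p K N y"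
proof -
  let ?C = "{x' \<in> Xset N. \<forall>mn\<in>sfset N \<phi>. x' mn = x mn}"
  let ?wS = "\<lambda>x. (\<Prod>mn\<in>sfset N \<phi>. if x mn then q else 1 - q)"
  let ?wO = "\<lambda>x. (\<Prod>mn\<in>grid N - sfset N \<phi>. if x mn then q else 1 - q)"
  have PXnn: "0 \<le> PX q N x" for x unfolding PX_def using q by (intro prod_nonneg) auto
  have Wnn: "0 \<le> WPhi R0 R1 Rs \<sigma> p K N y x" for x
    unfolding WPhi_def using s
    by (intro sum_nonneg mult_nonneg_nonneg PPhi_nonneg[OF pnn] less_imp_le[OF A_pos]) auto
  have "PPhi p N \<phi> * ?wS x * PYgXsfPhi R0 R1 Rs \<sigma> q N y x \<phi>
      = (\<Sum>x'\<in>?C. PX q N x' * (PPhi p N \<phi> * PYgXPhi R0 R1 Rs \<sigma> N y x' \<phi>))"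
    unfolding PYgXsfPhi_def sum_distrib_left
  proof (intro sum.cong refl)
    fix x' assume x': "x' \<in> ?C"
    then have "?wS x' = ?wS x" by (auto intro!: prod.cong)
    then show "PPhi p N \<phi> * ?wS x * (?wO x' * PYgXPhi R0 R1 Rs \<sigma> N y x' \<phi>)
        = PX q N x' * (PPhi p N \<phi> * PYgXPhi R0 R1 Rs \<sigma> N y x' \<phi>)"
      by (simp add: PX_split[of q N x' \<phi>])
  qed
  also have "\<dots> \<le> (\<Sum>x'\<in>?C. PX q N x' * WPhi R0 R1 Rs \<sigma> p K N y x')"
    by (intro sum_mono mult_left_mono W_ge[OF s pnn \<phi>] PXnn)
  also have "\<dots> \<le> (\<Sum>x'\<in>Xset N. PX q N x' * WPhi R0 R1 Rs \<sigma> p K N y x')"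
    by (intro sum_mono2) (auto intro!: mult_nonneg_nonneg PXnn Wnn)
  finally show ?thesis unfolding PY_def .
qed

lemma card_sfset:
  assumes \<phi>: "\<phi> \<in> Phiset K N"
  shows "card (sfset N \<phi>) \<le> 2 * K * N"
proof -
  have fin: "finite \<phi>" using \<phi> by (auto simp: Phiset_def intro: finite_subset[OF _ finite_grid])
  have sub: "sfset N \<phi> \<subseteq> (\<Union>ij\<in>\<phi>. ({fst ij} \<times> {1..N}) \<union> ({1..N} \<times> {snd ij}))"
    by (auto simp: sfset_def grid_def)
  have "card (sfset N \<phi>) \<le> card (\<Union>ij\<in>\<phi>. ({fst ij} \<times> {1..N}) \<union> ({1..N} \<times> {snd ij}))"
    by (rule card_mono[OF _ sub]) (simp add: fin)
  also have "\<dots> \<le> (\<Sum>ij\<in>\<phi>. card (({fst ij} \<times> {1..N}) \<union> ({1..N} \<times> {snd ij})))"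
    by (rule card_UN_le[OF fin])
  also have "\<dots> \<le> (\<Sum>ij\<in>\<phi>. 2 * N)"
  proof (intro sum_mono)
    fix ij
    have "card (({fst ij} \<times> {1..N}) \<union> ({1..N} \<times> {snd ij})) \<le> card ({fst ij} \<times> {1..N}) + card ({1..N} \<times> {snd ij})"
      by (rule card_Un_le)
    also have "\<dots> = 2 * N" by (simp add: card_cartesian_product)
    finally show "card (({fst ij} \<times> {1..N}) \<union> ({1..N} \<times> {snd ij})) \<le> 2 * N" .
  qed
  also have "\<dots> = 2 * N * card \<phi>" by simp
  also have "\<dots> \<le> 2 * N * K" using \<phi> by (auto simp: Phiset_def)
  finally show ?thesis by (simp add: mult.commute mult.left_commute)
qed

lemma wS_ge:
  fixes q :: real
  assumes \<phi>: "\<phi> \<in> Phiset K N" and q: "0 < q" "q < 1"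
  shows "(min q (1 - q)) ^ (2 * K * N) \<le> (\<Prod>mn\<in>sfset N \<phi>. if x mn then q else 1 - q)"
proof -
  let ?c = "min q (1 - q)"
  have "?c ^ (2 * K * N) \<le> ?c ^ card (sfset N \<phi>)"
    by (rule power_decreasing) (use q card_sfset[OF \<phi>] in auto)
  also have "\<dots> = (\<Prod>mn\<in>sfset N \<phi>. ?c)" by simp
  also have "\<dots> \<le> (\<Prod>mn\<in>sfset N \<phi>. if x mn then q else 1 - q)"
    using q by (intro prod_mono) auto
  finally show ?thesis .
qed

lemma PPhi_ge:
  assumes pnn: "\<And>k. k \<le> K \<Longrightarrow> 0 \<le> p k" and \<phi>: "\<phi> \<in> Phiset K N" and nz: "PPhi p N \<phi> \<noteq> 0"
    and N: "1 \<le> N"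
  shows "Min {p k |k. k \<le> K \<and> 0 < p k} / real (N\<^sup>2) ^ K \<le> PPhi p N \<phi>"
proof -
  let ?k = "card \<phi>"
  have k: "?k \<le> K" using \<phi> by (auto simp: Phiset_def)
  have kN: "?k \<le> N\<^sup>2"
  proof -
    have "\<phi> \<subseteq> grid N" using \<phi> by (auto simp: Phiset_def)
    then show ?thesis using card_mono[OF finite_grid] card_grid by metis
  qed
  have pk: "0 < p ?k" using nz pnn[OF k] by (auto simp: PPhi_def)
  have fin: "finite {p k |k. k \<le> K \<and> 0 < p k}" by simp
  have mem: "p ?k \<in> {p k |k. k \<le> K \<and> 0 < p k}" using k pk by blast
  have minle: "Min {p k |k. k \<le> K \<and> 0 < p k} \<le> p ?k" by (rule Min_le[OF fin mem])
  have minpos: "0 < Min {p k |k. k \<le> K \<and> 0 < p k}"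
    using fin mem by (subst Min_gr_iff) auto
  have b1: "real (N\<^sup>2 choose ?k) \<le> real (N\<^sup>2) ^ ?k"
    using binomial_le_pow[OF kN] by (simp flip: of_nat_power)
  have b2: "real (N\<^sup>2) ^ ?k \<le> real (N\<^sup>2) ^ K"
    using N k by (intro power_increasing) auto
  have bpos: "0 < real (N\<^sup>2 choose ?k)" using kN by simp
  have "Min {p k |k. k \<le> K \<and> 0 < p k} / real (N\<^sup>2) ^ K \<le> p ?k / real (N\<^sup>2) ^ K"
    using N by (intro divide_right_mono minle) auto
  also have "\<dots> \<le> p ?k / real (N\<^sup>2 choose ?k)"
    using pk bpos b1 b2 N by (intro divide_left_mono) (auto intro!: mult_pos_pos)
  finally show ?thesis by (simp add: PPhi_def)
qed


lemma det_bound: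
  fixes \<epsilon> T :: real
  assumes s: "0 < \<sigma>" and q: "0 < q" "q < 1" and pnn: "\<And>k. k \<le> K \<Longrightarrow> 0 \<le> p k"
    and N: "1 \<le> N" and x: "x \<in> Xset N" and \<phi>: "\<phi> \<in> Phiset K N" and nz: "PPhi p N \<phi> \<noteq> 0"
    and uT: "WPhi R0 R1 Rs \<sigma> p K N (Yout R0 R1 Rs x \<phi> z) x / PYgXPhi R0 R1 Rs \<sigma> N (Yout R0 R1 Rs x \<phi> z) x \<phi> < T"
    and vT: "PY R0 R1 Rs \<sigma> q p K N (Yout R0 R1 Rs x \<phi> z) / PYgXsfPhi R0 R1 Rs \<sigma> q N (Yout R0 R1 Rs x \<phi> z) x \<phi> < T"
    and T: "log 2 T \<le> \<epsilon> * real N ^ 2 / 2"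
    and L: "- (\<epsilon> * real N ^ 2 / 2) < log 2 (Min {p k |k. k \<le> K \<and> 0 < p k} / real (N\<^sup>2) ^ K * (min q (1 - q)) ^ (2 * K * N))"
  shows "\<bar>Iq R0 R1 Rs \<sigma> q p K N ((x, \<phi>), z) - Iq_tilde R0 R1 Rs \<sigma> q N ((x, \<phi>), z)\<bar> < \<epsilon>"
proof -
  define y where "y = Yout R0 R1 Rs x \<phi> z"
  define W where "W = WPhi R0 R1 Rs \<sigma> p K N y x"
  define A where "A = PYgXPhi R0 R1 Rs \<sigma> N y x \<phi>"
  define P where "P = PY R0 R1 Rs \<sigma> q p K N y"
  define B where "B = PYgXsfPhi R0 R1 Rs \<sigma> q N y x \<phi>"
  define pm where "pm = Min {p k |k. k \<le> K \<and> 0 < p k}"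
  define c where "c = min q (1 - q)"
  define wS where "wS = (\<Prod>mn\<in>sfset N \<phi>. if x mn then q else 1 - q)"
  define L1 where "L1 = pm / real (N\<^sup>2) ^ K"
  have Ap: "0 < A" unfolding A_def by (rule A_pos[OF s])
  have Bp: "0 < B" unfolding B_def by (rule B_pos[OF s q x])
  have "0 \<le> PPhi p N \<phi>" by (rule PPhi_nonneg[OF pnn \<phi>])
  then have PPp: "0 < PPhi p N \<phi>" using nz by linarith
  have L1le: "L1 \<le> PPhi p N \<phi>" unfolding L1_def pm_def by (rule PPhi_ge[OF pnn \<phi> nz N])
  have cpos: "0 < c" "c \<le> 1" using q by (auto simp: c_def)
  have wSge: "c ^ (2 * K * N) \<le> wS" unfolding c_def wS_def by (rule wS_ge[OF \<phi> q])
  have cpow: "0 < c ^ (2 * K * N)" "c ^ (2 * K * N) \<le> 1" using cpos by (auto intro: power_le_one)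
  have Wge: "PPhi p N \<phi> * A \<le> W" unfolding W_def A_def by (rule W_ge[OF s pnn \<phi>])
  have Pge: "PPhi p N \<phi> * wS * B \<le> P" unfolding P_def wS_def B_def by (rule P_ge[OF s pnn \<phi> q x])
  have Wp: "0 < W" using Wge PPp Ap by (meson mult_pos_pos order_less_le_trans)
  have wSp: "0 < wS" using wSge cpow by linarith
  have Pp: "0 < P" using Pge PPp wSp Bp by (meson mult_pos_pos order_less_le_trans)
  define L2 where "L2 = L1 * c ^ (2 * K * N)"
  have L1p: "0 < L1" using PPp L1le
    unfolding L1_def pm_def
  proof -
    have "0 < p (card \<phi>)" using nz pnn[of "card \<phi>"] \<phi> by (auto simp: PPhi_def Phiset_def)
    moreover have "card \<phi> \<le> K" using \<phi> by (auto simp: Phiset_def)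
    ultimately have "p (card \<phi>) \<in> {p k |k. k \<le> K \<and> 0 < p k}" by blast
    then have "0 < Min {p k |k. k \<le> K \<and> 0 < p k}" by (subst Min_gr_iff) auto
    then show "0 < Min {p k |k. k \<le> K \<and> 0 < p k} / real (N\<^sup>2) ^ K" using N by simp
  qed
  have L2p: "0 < L2" unfolding L2_def using L1p cpow by simp
  have uge: "L2 \<le> W / A"
  proof -
    have "L2 \<le> L1" unfolding L2_def using L1p cpow by (simp add: mult_left_le)
    also have "\<dots> \<le> PPhi p N \<phi>" by (rule L1le)
    also have "\<dots> \<le> W / A" using Wge Ap by (simp add: pos_le_divide_eq)
    finally show ?thesis .
  qed
  have vge: "L2 \<le> P / B"
  proof -
    have "L2 \<le> PPhi p N \<phi> * wS" unfolding L2_def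
      using L1le wSge L1p cpow by (intro mult_mono) auto
    also have "\<dots> \<le> P / B" using Pge Bp by (simp add: pos_le_divide_eq)
    finally show ?thesis .
  qed
  have LL: "- (\<epsilon> * real N ^ 2 / 2) < log 2 L2" using L unfolding L2_def L1_def pm_def c_def .
  have up: "0 < W / A" using Wp Ap by simp
  have vp: "0 < P / B" using Pp Bp by simp
  have u1: "log 2 L2 \<le> log 2 (W / A)" using uge L2p by simp
  have u2: "log 2 (W / A) < log 2 T" using uT up unfolding W_def A_def y_def by simp
  have v1: "log 2 L2 \<le> log 2 (P / B)" using vge L2p by simp
  have v2: "log 2 (P / B) < log 2 T" using vT vp unfolding P_def B_def y_def by simp
  have key: "log 2 (W / P) - log 2 (A / B) = log 2 (W / A) - log 2 (P / B)"
    using Wp Ap Pp Bp by (simp add: log_divide)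
  have Npos: "0 < real N ^ 2" using N by simp
  have bd: "\<bar>log 2 (W / A) - log 2 (P / B)\<bar> < \<epsilon> * real N ^ 2"
    using u1 u2 v1 v2 LL T by linarith
  have "Iq R0 R1 Rs \<sigma> q p K N ((x, \<phi>), z) - Iq_tilde R0 R1 Rs \<sigma> q N ((x, \<phi>), z)
      = (log 2 (W / A) - log 2 (P / B)) / real N ^ 2"
  proof -
    have "Iq R0 R1 Rs \<sigma> q p K N ((x, \<phi>), z) - Iq_tilde R0 R1 Rs \<sigma> q N ((x, \<phi>), z)
      = (log 2 (W / P) - log 2 (A / B)) / real N ^ 2"
      unfolding Iq_def Iq_tilde_def Let_def fst_conv snd_conv
      by (simp add: y_def W_def A_def P_def B_def diff_divide_distrib)
    then show ?thesis by (simp add: key)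
  qed
  then show ?thesis using bd Npos by (simp add: abs_divide pos_divide_less_eq)
qed


lemma log2_le_self: "1 \<le> n \<Longrightarrow> log 2 (real n) \<le> real n"
proof -
  assume n: "1 \<le> n"
  have "real n < 2 ^ n" using less_exp[of n] by (metis of_nat_less_numeral_power_cancel_iff)
  then have "log 2 (real n) < log 2 (2 ^ n)" using n by (intro log_less) auto
  also have "log 2 (2 ^ n) = real n" by (simp add: log_nat_power)
  finally show ?thesis by simp
qed

lemma log_L2_lower:
  fixes pm c :: real
  assumes N: "1 \<le> N" and pm: "0 < pm" and c: "0 < c" "c \<le> 1"
  shows "- \<bar>log 2 pm\<bar> - (2 * real K + 2 * real K * \<bar>log 2 c\<bar>) * real N
      \<le> log 2 (pm / real (N\<^sup>2) ^ K * c ^ (2 * K * N))"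
proof -
  have Np: "0 < real N" using N by simp
  have "log 2 (pm / real (N\<^sup>2) ^ K * c ^ (2 * K * N))
      = log 2 pm - real K * (2 * log 2 (real N)) + real (2 * K * N) * log 2 c"
  proof -
    have e1: "log 2 (real (N\<^sup>2) ^ K) = real K * (2 * log 2 (real N))"
      using Np by (simp add: log_nat_power)
    have e2: "log 2 (c ^ (2 * K * N)) = real (2 * K * N) * log 2 c"
      using c by (simp add: log_nat_power)
    have "log 2 (pm / real (N\<^sup>2) ^ K * c ^ (2 * K * N))
        = log 2 pm - log 2 (real (N\<^sup>2) ^ K) + log 2 (c ^ (2 * K * N))"
      using pm c Np by (simp add: log_mult log_divide)
    then show ?thesis using e1 e2 by simp
  qed
  moreover have "real K * (2 * log 2 (real N)) \<le> real K * (2 * real N)"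
    using log2_le_self[OF N] by (intro mult_left_mono) auto
  moreover have "log 2 c \<le> 0" using c by simp
  then have "real (2 * K * N) * log 2 c = - (2 * real K * \<bar>log 2 c\<bar> * real N)" by simp
  moreover have "(2 * real K + 2 * real K * \<bar>log 2 c\<bar>) * real N
      = real K * (2 * real N) + 2 * real K * \<bar>log 2 c\<bar> * real N" by (simp add: algebra_simps)
  moreover have "- \<bar>log 2 pm\<bar> \<le> log 2 pm" by simp
  ultimately show ?thesis by (simp only:)
qed


lemma meas_diff:
  "(\<lambda>\<omega>. Iq R0 R1 Rs \<sigma> q p K N \<omega> - Iq_tilde R0 R1 Rs \<sigma> q N \<omega>) \<in> borel_measurable (Omega \<sigma> q p K N)"
proof (rule meas_Omega)
  fix d :: "bmat \<times> pattern"
  let ?H = "\<lambda>y. 1 / real (N\<^sup>2) * log 2 (WPhi R0 R1 Rs \<sigma> p K N y (fst d) / PY R0 R1 Rs \<sigma> q p K N y)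
     - 1 / real (N\<^sup>2) * log 2 (PYgXPhi R0 R1 Rs \<sigma> N y (fst d) (snd d) / PYgXsfPhi R0 R1 Rs \<sigma> q N y (fst d) (snd d))"
  have "(\<lambda>z. ?H (Yout R0 R1 Rs (fst d) (snd d) z)) \<in> borel_measurable (Noise_law \<sigma> N)"
    by (rule meas_Yout) (measurable, simp only: restr_W restr_A restr_P restr_B)
  then show "(\<lambda>z. Iq R0 R1 Rs \<sigma> q p K N (d, z) - Iq_tilde R0 R1 Rs \<sigma> q N (d, z)) \<in> borel_measurable (Noise_law \<sigma> N)"
    unfolding Iq_def Iq_tilde_def Let_def by simp
qed

lemma good_sets:
  "{\<omega> \<in> space (Omega \<sigma> q p K N). \<bar>Iq R0 R1 Rs \<sigma> q p K N \<omega> - Iq_tilde R0 R1 Rs \<sigma> q N \<omega>\<bar> < \<epsilon>} \<in> sets (Omega \<sigma> q p K N)"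
proof -
  have [measurable]: "(\<lambda>\<omega>. Iq R0 R1 Rs \<sigma> q p K N \<omega> - Iq_tilde R0 R1 Rs \<sigma> q N \<omega>) \<in> borel_measurable (Omega \<sigma> q p K N)"
    by (rule meas_diff)
  show ?thesis by measurable
qed


lemma lt_of_div: "0 < (T::real) \<Longrightarrow> 1 / T * u < 1 \<Longrightarrow> u < T"
  by (simp add: field_simps)

lemma per_N:
  fixes \<epsilon> :: real
  assumes s: "0 < \<sigma>" and q: "0 < q" "q < 1" and pnn: "\<And>k. k \<le> K \<Longrightarrow> 0 \<le> p k"
    and ps: "(\<Sum>k\<le>K. p k) = 1" and e: "0 < \<epsilon>" and N: "1 \<le> N" and KN: "K \<le> N\<^sup>2"
    and L: "- (\<epsilon> * real N ^ 2 / 2) < log 2 (Min {p k |k. k \<le> K \<and> 0 < p k} / real (N\<^sup>2) ^ K * (min q (1 - q)) ^ (2 * K * N))"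
  shows "1 - 2 * (inverse (2 powr (\<epsilon> / 2))) ^ N \<le> measure (Omega \<sigma> q p K N)
            {\<omega> \<in> space (Omega \<sigma> q p K N). \<bar>Iq R0 R1 Rs \<sigma> q p K N \<omega> - Iq_tilde R0 R1 Rs \<sigma> q N \<omega>\<bar> < \<epsilon>}"
proof -
  let ?M = "Omega \<sigma> q p K N"
  let ?G = "{\<omega> \<in> space ?M. \<bar>Iq R0 R1 Rs \<sigma> q p K N \<omega> - Iq_tilde R0 R1 Rs \<sigma> q N \<omega>\<bar> < \<epsilon>}"
  have em: "emeasure ?M (space ?M) = 1"
    using Omega_space_emeasure[OF s q pnn] sum_PPhi_eq[OF ps KN] by simp
  interpret M: prob_space ?M by (rule prob_spaceI) (rule em)
  define R where "R = 2 powr (\<epsilon> / 2)"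
  define T where "T = R ^ N"
  have R1: "1 < R" unfolding R_def using e by simp
  have Tp: "0 < T" unfolding T_def using R1 by simp
  have logT: "log 2 T \<le> \<epsilon> * real N ^ 2 / 2"
  proof -
    have "log 2 T = real N * (\<epsilon> / 2)" unfolding T_def R_def by (simp add: log_nat_power)
    also have "\<dots> \<le> real N ^ 2 * (\<epsilon> / 2)"
      using N e by (intro mult_right_mono) (auto simp: power2_eq_square)
    finally show ?thesis by (simp add: mult.commute)
  qed
  define bU where "bU = {\<omega> \<in> space ?M. 1 \<le> ennreal (1 / T) * UU R0 R1 Rs \<sigma> p K N \<omega>}"
  define bV where "bV = {\<omega> \<in> space ?M. 1 \<le> ennreal (1 / T) * VV R0 R1 Rs \<sigma> q p K N \<omega>}"
  have bUs: "bU \<in> sets ?M" unfolding bU_def by measurable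
  have bVs: "bV \<in> sets ?M" unfolding bV_def by measurable
  have eU: "emeasure ?M bU \<le> ennreal (1 / T)"
  proof -
    have "emeasure ?M bU \<le> ennreal (1 / T) * (\<integral>\<^sup>+\<omega>. UU R0 R1 Rs \<sigma> p K N \<omega> * indicator (space ?M) \<omega> \<partial>?M)"
      unfolding bU_def by (rule nn_integral_Markov_inequality) auto
    also have "(\<integral>\<^sup>+\<omega>. UU R0 R1 Rs \<sigma> p K N \<omega> * indicator (space ?M) \<omega> \<partial>?M) = (\<integral>\<^sup>+\<omega>. UU R0 R1 Rs \<sigma> p K N \<omega> \<partial>?M)"
      by (intro nn_integral_cong) simp
    also have "ennreal (1 / T) * \<dots> \<le> ennreal (1 / T) * 1"
      by (intro mult_left_mono int_UU[OF s q pnn ps]) auto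
    finally show ?thesis by simp
  qed
  have eV: "emeasure ?M bV \<le> ennreal (1 / T)"
  proof -
    have "emeasure ?M bV \<le> ennreal (1 / T) * (\<integral>\<^sup>+\<omega>. VV R0 R1 Rs \<sigma> q p K N \<omega> * indicator (space ?M) \<omega> \<partial>?M)"
      unfolding bV_def by (rule nn_integral_Markov_inequality) auto
    also have "(\<integral>\<^sup>+\<omega>. VV R0 R1 Rs \<sigma> q p K N \<omega> * indicator (space ?M) \<omega> \<partial>?M) = (\<integral>\<^sup>+\<omega>. VV R0 R1 Rs \<sigma> q p K N \<omega> \<partial>?M)"
      by (intro nn_integral_cong) simp
    also have "ennreal (1 / T) * \<dots> \<le> ennreal (1 / T) * 1"
      by (intro mult_left_mono int_VV[OF s q pnn ps]) auto
    finally show ?thesis by simp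
  qed
  have mU: "measure ?M bU \<le> 1 / T"
    using eU Tp by (simp add: M.emeasure_eq_measure)
  have mV: "measure ?M bV \<le> 1 / T"
    using eV Tp by (simp add: M.emeasure_eq_measure)
  have sub: "space ?M - (bU \<union> bV) \<subseteq> ?G"
  proof
    fix \<omega> assume \<omega>: "\<omega> \<in> space ?M - (bU \<union> bV)"
    obtain x \<phi> z where \<omega>eq: "\<omega> = ((x, \<phi>), z)" by (metis prod.collapse)
    have x: "x \<in> Xset N" and \<phi>: "\<phi> \<in> Phiset K N" using \<omega> by (auto simp: \<omega>eq space_Omega)
    have nU: "ennreal (1 / T) * UU R0 R1 Rs \<sigma> p K N \<omega> < 1" using \<omega> by (auto simp: bU_def not_le)
    have nV: "ennreal (1 / T) * VV R0 R1 Rs \<sigma> q p K N \<omega> < 1" using \<omega> by (auto simp: bV_def not_le)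
    have nz: "PPhi p N \<phi> \<noteq> 0"
    proof
      assume "PPhi p N \<phi> = 0"
      then have "UU R0 R1 Rs \<sigma> p K N \<omega> = \<infinity>" by (simp add: UU_def \<omega>eq)
      then have "ennreal (1 / T) * UU R0 R1 Rs \<sigma> p K N \<omega> = \<infinity>" using Tp by (simp add: ennreal_mult_top)
      with nU show False by simp
    qed
    let ?y = "Yout R0 R1 Rs x \<phi> z"
    have UUe: "UU R0 R1 Rs \<sigma> p K N \<omega> = ennreal (WPhi R0 R1 Rs \<sigma> p K N ?y x / PYgXPhi R0 R1 Rs \<sigma> N ?y x \<phi>)"
      using nz by (simp add: UU_def Let_def \<omega>eq)
    have "ennreal (1 / T * (WPhi R0 R1 Rs \<sigma> p K N ?y x / PYgXPhi R0 R1 Rs \<sigma> N ?y x \<phi>)) < 1"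
    proof -
      have "ennreal (1 / T * (WPhi R0 R1 Rs \<sigma> p K N ?y x / PYgXPhi R0 R1 Rs \<sigma> N ?y x \<phi>))
          = ennreal (1 / T) * ennreal (WPhi R0 R1 Rs \<sigma> p K N ?y x / PYgXPhi R0 R1 Rs \<sigma> N ?y x \<phi>)"
        using Tp by (intro ennreal_mult') simp
      then show ?thesis using nU unfolding UUe by (simp only:)
    qed
    then have uT: "WPhi R0 R1 Rs \<sigma> p K N ?y x / PYgXPhi R0 R1 Rs \<sigma> N ?y x \<phi> < T"
      by (intro lt_of_div[OF Tp]) (simp only: ennreal_less_one_iff)
    have VVe: "VV R0 R1 Rs \<sigma> q p K N \<omega> = ennreal (PY R0 R1 Rs \<sigma> q p K N ?y / PYgXsfPhi R0 R1 Rs \<sigma> q N ?y x \<phi>)"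
      by (simp add: VV_def Let_def \<omega>eq)
    have "ennreal (1 / T * (PY R0 R1 Rs \<sigma> q p K N ?y / PYgXsfPhi R0 R1 Rs \<sigma> q N ?y x \<phi>)) < 1"
    proof -
      have "ennreal (1 / T * (PY R0 R1 Rs \<sigma> q p K N ?y / PYgXsfPhi R0 R1 Rs \<sigma> q N ?y x \<phi>))
          = ennreal (1 / T) * ennreal (PY R0 R1 Rs \<sigma> q p K N ?y / PYgXsfPhi R0 R1 Rs \<sigma> q N ?y x \<phi>)"
        using Tp by (intro ennreal_mult') simp
      then show ?thesis using nV unfolding VVe by (simp only:)
    qed
    then have vT: "PY R0 R1 Rs \<sigma> q p K N ?y / PYgXsfPhi R0 R1 Rs \<sigma> q N ?y x \<phi> < T"
      by (intro lt_of_div[OF Tp]) (simp only: ennreal_less_one_iff)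
    have "\<bar>Iq R0 R1 Rs \<sigma> q p K N ((x, \<phi>), z) - Iq_tilde R0 R1 Rs \<sigma> q N ((x, \<phi>), z)\<bar> < \<epsilon>"
      by (rule det_bound[OF s q pnn N x \<phi> nz uT vT logT L])
    then show "\<omega> \<in> ?G" using \<omega> by (simp add: \<omega>eq)
  qed
  have "1 - 2 * (1 / T) \<le> 1 - (measure ?M bU + measure ?M bV)" using mU mV by simp
  also have "\<dots> \<le> 1 - measure ?M (bU \<union> bV)"
  proof -
    have "measure ?M (bU \<union> bV) \<le> measure ?M bU + measure ?M bV"
      by (rule measure_subadditive[OF bUs bVs]) (simp_all add: M.emeasure_eq_measure)
    then show ?thesis by linarith
  qed
  also have "\<dots> = measure ?M (space ?M - (bU \<union> bV))"
    using M.prob_compl[of "bU \<union> bV"] bUs bVs by simp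
  also have "\<dots> \<le> measure ?M ?G"
    by (rule M.finite_measure_mono[OF sub good_sets])
  finally have fin: "1 - 2 * (1 / T) \<le> measure ?M ?G" .
  have "inverse (2 powr (\<epsilon> / 2)) ^ N = 1 / T" unfolding T_def R_def by (simp add: inverse_eq_divide power_divide)
  then show ?thesis using fin by simp
qed


lemma upper_N:
  assumes s: "0 < \<sigma>" and q: "0 < q" "q < 1" and pnn: "\<And>k. k \<le> K \<Longrightarrow> 0 \<le> p k"
    and ps: "(\<Sum>k\<le>K. p k) = 1" and KN: "K \<le> N\<^sup>2"
  shows "measure (Omega \<sigma> q p K N) A \<le> 1"
proof -
  have em: "emeasure (Omega \<sigma> q p K N) (space (Omega \<sigma> q p K N)) = 1"
    using Omega_space_emeasure[OF s q pnn] sum_PPhi_eq[OF ps KN] by simp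
  interpret M: prob_space "Omega \<sigma> q p K N" by (rule prob_spaceI) (rule em)
  show ?thesis by (rule M.prob_le_1)
qed

theorem corollary1:
  fixes R0 R1 Rs \<sigma> q \<epsilon> :: real and K :: nat and p :: "nat \<Rightarrow> real"
  assumes "0 < R1" "R1 < R0" "0 < Rs" "0 < \<sigma>" "0 < q" "q < 1"
    and "\<And>k. k \<le> K \<Longrightarrow> 0 \<le> p k" "(\<Sum>k\<le>K. p k) = 1"
    and "0 < \<epsilon>"
  shows "(\<lambda>N. measure (Omega \<sigma> q p K N)
            {\<omega> \<in> space (Omega \<sigma> q p K N).
               \<bar>Iq R0 R1 Rs \<sigma> q p K N \<omega> - Iq_tilde R0 R1 Rs \<sigma> q N \<omega>\<bar> < \<epsilon>})
         \<longlonglongrightarrow> 1"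
proof -
  note s = assms(4) and q = assms(5,6) and pnn = assms(7) and ps = assms(8) and e = assms(9)
  define pm where "pm = Min {p k |k. k \<le> K \<and> 0 < p k}"
  define c where "c = min q (1 - q)"
  have "\<exists>k\<le>K. 0 < p k"
  proof (rule ccontr)
    assume "\<not> (\<exists>k\<le>K. 0 < p k)"
    then have "\<forall>k\<in>{..K}. p k = 0" using pnn by force
    then have "(\<Sum>k\<le>K. p k) = 0" by simp
    with ps show False by simp
  qed
  then obtain k0 where k0: "k0 \<le> K" "0 < p k0" by blast
  have fin: "finite {p k |k. k \<le> K \<and> 0 < p k}" by simp
  have mem: "p k0 \<in> {p k |k. k \<le> K \<and> 0 < p k}" using k0 by blast
  have pm: "0 < pm" unfolding pm_def using fin mem by (subst Min_gr_iff) auto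
  have cp: "0 < c" "c \<le> 1" using q by (auto simp: c_def)
  define a0 where "a0 = \<bar>log 2 pm\<bar>"
  define C where "C = 2 * real K + 2 * real K * \<bar>log 2 c\<bar>"
  have a0: "0 \<le> a0" and C: "0 \<le> C" by (auto simp: a0_def C_def)
  define N0 where "N0 = nat \<lceil>2 * (a0 + C) / \<epsilon>\<rceil> + K + 1"
  have cond: "1 \<le> N \<and> K \<le> N\<^sup>2 \<and> - (\<epsilon> * real N ^ 2 / 2) < log 2 (pm / real (N\<^sup>2) ^ K * c ^ (2 * K * N))"
    if N: "N0 \<le> N" for N
  proof (intro conjI)
    show N1: "1 \<le> N" using N by (simp add: N0_def)
    have "K \<le> N" using N by (simp add: N0_def)
    also have "N \<le> N\<^sup>2" by (simp add: power2_eq_square)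
    finally show "K \<le> N\<^sup>2" .
    have "2 * (a0 + C) / \<epsilon> < real N"
    proof -
      have "2 * (a0 + C) / \<epsilon> \<le> real (nat \<lceil>2 * (a0 + C) / \<epsilon>\<rceil>)" by linarith
      also have "\<dots> < real N" using N by (simp add: N0_def)
      finally show ?thesis .
    qed
    then have h1: "a0 + C < \<epsilon> * real N / 2" using e by (simp add: field_simps)
    have h2: "a0 + C * real N \<le> (a0 + C) * real N"
    proof -
      have "a0 * 1 \<le> a0 * real N" using a0 N1 by (intro mult_left_mono) auto
      then show ?thesis by (simp add: distrib_right)
    qed
    have h3: "(a0 + C) * real N < \<epsilon> * real N / 2 * real N"
      using h1 N1 by (intro mult_strict_right_mono) auto
    have h4: "- a0 - C * real N \<le> log 2 (pm / real (N\<^sup>2) ^ K * c ^ (2 * K * N))"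
      using log_L2_lower[OF N1 pm cp] unfolding a0_def C_def by simp
    show "- (\<epsilon> * real N ^ 2 / 2) < log 2 (pm / real (N\<^sup>2) ^ K * c ^ (2 * K * N))"
      using h2 h3 h4 by (simp add: power2_eq_square)
  qed
  define R where "R = 2 powr (\<epsilon> / 2)"
  have R1: "1 < R" unfolding R_def using e by simp
  have lim: "(\<lambda>N. 1 - 2 * (inverse R) ^ N) \<longlonglongrightarrow> 1"
  proof -
    have "(\<lambda>N. (inverse R) ^ N) \<longlonglongrightarrow> 0"
    proof -
      have "norm (inverse R) < 1" using R1 by (simp add: inverse_less_1_iff)
      then show ?thesis by (rule LIMSEQ_power_zero)
    qed
    then have "(\<lambda>N. 1 - 2 * (inverse R) ^ N) \<longlonglongrightarrow> 1 - 2 * 0"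
      by (rule tendsto_diff[OF tendsto_const tendsto_mult[OF tendsto_const]])
    then show ?thesis by simp
  qed
  show ?thesis
  proof (rule tendsto_sandwich[OF _ _ lim tendsto_const])
    show "\<forall>\<^sub>F N in sequentially. 1 - 2 * inverse R ^ N \<le> measure (Omega \<sigma> q p K N)
            {\<omega> \<in> space (Omega \<sigma> q p K N). \<bar>Iq R0 R1 Rs \<sigma> q p K N \<omega> - Iq_tilde R0 R1 Rs \<sigma> q N \<omega>\<bar> < \<epsilon>}"
    proof (rule eventually_sequentiallyI[of N0])
      fix N assume "N0 \<le> N"
      from cond[OF this] have c1: "1 \<le> N" and c2: "K \<le> N\<^sup>2"
        and c3: "- (\<epsilon> * real N ^ 2 / 2) < log 2 (Min {p k |k. k \<le> K \<and> 0 < p k} / real (N\<^sup>2) ^ K * (min q (1 - q)) ^ (2 * K * N))"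
        unfolding pm_def c_def by auto
      show "1 - 2 * inverse R ^ N \<le> measure (Omega \<sigma> q p K N)
            {\<omega> \<in> space (Omega \<sigma> q p K N). \<bar>Iq R0 R1 Rs \<sigma> q p K N \<omega> - Iq_tilde R0 R1 Rs \<sigma> q N \<omega>\<bar> < \<epsilon>}"
        unfolding R_def by (rule per_N[OF s q pnn ps e c1 c2 c3])
    qed
    show "\<forall>\<^sub>F N in sequentially. measure (Omega \<sigma> q p K N)
            {\<omega> \<in> space (Omega \<sigma> q p K N). \<bar>Iq R0 R1 Rs \<sigma> q p K N \<omega> - Iq_tilde R0 R1 Rs \<sigma> q N \<omega>\<bar> < \<epsilon>} \<le> 1"
    proof (rule eventually_sequentiallyI[of N0])
      fix N assume "N0 \<le> N"
      from cond[OF this] have c2: "K \<le> N\<^sup>2" by auto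
      show "measure (Omega \<sigma> q p K N)
            {\<omega> \<in> space (Omega \<sigma> q p K N). \<bar>Iq R0 R1 Rs \<sigma> q p K N \<omega> - Iq_tilde R0 R1 Rs \<sigma> q N \<omega>\<bar> < \<epsilon>} \<le> 1"
        by (rule upper_N[OF s q pnn ps c2])
    qed
  qed
qed


end
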